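(* In the trilevel setting, let $\Omega:=\{x\in\mathrm{Fix}(W):\langle (I-T)x,y-x\rangle\ge0\ \forall y\in\mathrm{Fix}(W)\}$ be nonempty. Assume $\lim_{k\to\infty}\beta_k/\alpha_k=+\infty$, $\alpha_k\to0$, $\sum_k\alpha_k=\infty$, there is $K>0$ with $\limsup_{k}\frac1{\alpha_k}\left|\frac1{\beta_k}-\frac1{\beta_{k-1}}\right|\le K$, $\limsup_{k}\frac{|\beta_k-\beta_{k-1}|+|\alpha_k-\alpha_{k-1}|}{\alpha_k\beta_k}=0$, and that the trilevel iteration sequence $\{x^k\}$ is bounded. Suppose further: $(A_1)$ $W$ is boundedly linearly regular, i.e. for every $\rho>0$ there is $\theta>0$ with $d(x,\mathrm{Fix}(W))\le\theta\|x-W(x)\|$ for all $x$ with $\|x\|\le\rho$; $(A_2)$ $\limsup_{k\to\infty}\beta_k^2/\alpha_k=0$. Then $\{x^k\}$ converges to the unique $x^*\in\Omega$ satisfying $\langle x^*-S(x^* ),x-x^*\rangle\ge0$ for all $x\in\Omega$; equivalently $\omega(x^* )=\min_{x\in\Omega}\omega(x)$.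
   Context: Trilevel setting. Let $f_1,f_2:\mathbb R^n\to\mathbb R$ be convex and continuously differentiable with $L_{f_i}$-Lipschitz gradients, and $g_1,g_2:\mathbb R^n\to(-\infty,+\infty]$ proper, lower semicontinuous and convex; put $\phi_i=f_i+g_i$. Let $\omega:\mathbb R^n\to\mathbb R$ be $\mu$-strongly convex and continuously differentiable with $L_\omega$-Lipschitz gradient. Let $Y^*=\arg\min_{x\in\mathbb R^n}\phi_2(x)$ and $X^*=\arg\min_{x\in Y^*}\phi_1(x)$, both assumed nonempty. For a proper lsc convex $g$, $\mathrm{prox}_g(x)=\arg\min_{u}\{g(u)+\tfrac12\|u-x\|^2\}$. Fix $u\in(0,\tfrac{2}{L_\omega+\mu}]$, $t\in(0,1/L_{f_1}]$, $s\in(0,1/L_{f_2}]$ and define $S(x)=x-u\nabla\omega(x)$, $T(x)=\mathrm{prox}_{tg_1}(x-t\nabla f_1(x))$, $W(x)=\mathrm{prox}_{sg_2}(x-s\nabla f_2(x))$. Then $S$ is a contraction with constant $r=\sqrt{1-\tfrac{2u\mu L_\omega}{\mu+L_\omega}}\in[0,1)$, $T,W$ are nonexpansive, $\mathrm{Fix}(W)=Y^*$. Given $x^0\in\mathbb R^n$ and real sequences $\alpha_k,\beta_k\in(0,1)$, the trilevel iteration sequence is $x^{k+1}=\alpha_kS(x^k)+(1-\alpha_k)\beta_kT(x^k)+(1-\alpha_k)(1-\beta_k)W(x^k)$, $k\ge0$. $I$ is the identity, $d(x,A)=\inf_{a\in A}\|x-a\|$. *)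

theory Defs
  imports "HOL-Analysis.Analysis"
begin

text \<open>Extended-real-valued functions on a real inner product space model
  functions into (-infinity, +infinity].\<close>

definition proper_fun :: "('a \<Rightarrow> ereal) \<Rightarrow> bool" where
  "proper_fun g \<longleftrightarrow> (\<forall>x. g x \<noteq> -\<infinity>) \<and> (\<exists>x. g x < \<infinity>)"

definition lsc_fun :: "('a::topological_space \<Rightarrow> ereal) \<Rightarrow> bool" where
  "lsc_fun g \<longleftrightarrow> (\<forall>x X. X \<longlonglongrightarrow> x \<longrightarrow> g x \<le> liminf (\<lambda>k. g (X k)))"

definition convex_efun :: "('a::real_vector \<Rightarrow> ereal) \<Rightarrow> bool" where
  "convex_efun g \<longleftrightarrow> (\<forall>x y (l::real). 0 < l \<and> l < 1 \<longrightarrow>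
      g ((1 - l) *\<^sub>R x + l *\<^sub>R y) \<le> ereal (1 - l) * g x + ereal l * g y)"

definition strongly_convex :: "real \<Rightarrow> ('a::real_inner \<Rightarrow> real) \<Rightarrow> bool" where
  "strongly_convex \<mu> \<omega> \<longleftrightarrow> convex_on UNIV (\<lambda>x. \<omega> x - \<mu> / 2 * (norm x)\<^sup>2)"

definition prox :: "('a::real_normed_vector \<Rightarrow> ereal) \<Rightarrow> 'a \<Rightarrow> 'a" where
  "prox g x = (SOME p. \<forall>v. g p + ereal ((norm (p - x))\<^sup>2 / 2) \<le> g v + ereal ((norm (v - x))\<^sup>2 / 2))"

definition fixpts :: "('a \<Rightarrow> 'a) \<Rightarrow> 'a set" where
  "fixpts F = {x. F x = x}"

end

theory Submission
  imports Defs
begin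

lemma line_deriv:
  fixes f :: "'a::real_inner \<Rightarrow> real"
  assumes gd: "\<And>z. GDERIV f z :> g z"
  shows "((\<lambda>l. f (x + l *\<^sub>R d)) has_real_derivative (inner d (g (x + l *\<^sub>R d)))) (at l)"
proof -
  have 1: "((\<lambda>l. x + l *\<^sub>R d) has_derivative (\<lambda>h. h *\<^sub>R d)) (at l)"
    by (auto intro!: derivative_eq_intros)
  have 2: "(f has_derivative (\<lambda>h. inner h (g (x + l *\<^sub>R d)))) (at (x + l *\<^sub>R d))"
    using gd unfolding gderiv_def by blast
  have "((\<lambda>l. f (x + l *\<^sub>R d)) has_derivative (\<lambda>h. inner (h *\<^sub>R d) (g (x + l *\<^sub>R d)))) (at l)"
    using has_derivative_compose[OF 1 2] by simp
  moreover have "(\<lambda>h. h * (inner d (g (x + l *\<^sub>R d)))) = (\<lambda>h. (inner d (g (x + l *\<^sub>R d))) * h)"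
    by (rule ext) simp
  ultimately show ?thesis unfolding has_field_derivative_def by simp
qed

lemma grad_ineq:
  fixes f :: "'a::real_inner \<Rightarrow> real"
  assumes cv: "convex_on UNIV f" and gd: "\<And>z. GDERIV f z :> g z"
  shows "f x + inner (g x) (y - x) \<le> f y"
proof -
  define d where "d = y - x"
  define \<phi> where "\<phi> = (\<lambda>l. f (x + l *\<^sub>R d))"
  have D: "(\<phi> has_real_derivative (inner d (g x))) (at 0)"
    using line_deriv[OF gd, of x d 0] unfolding \<phi>_def by simp
  hence "((\<lambda>l. (\<phi> l - \<phi> 0) / (l - 0)) \<longlongrightarrow> inner d (g x)) (at 0)"
    using has_field_derivative_iff by blast
  hence L: "((\<lambda>l. (\<phi> l - \<phi> 0) / (l - 0)) \<longlongrightarrow> inner d (g x)) (at_right 0)"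
    by (rule tendsto_mono[rotated]) (simp add: at_le)
  have ev0: "eventually (\<lambda>l. l \<in> {0<..<1}) (at_right (0::real))"
    by (rule eventually_at_right_real) simp
  have ev: "eventually (\<lambda>l. (\<phi> l - \<phi> 0) / (l - 0) \<le> f y - f x) (at_right (0::real))"
    using ev0
  proof (rule eventually_mono)
    fix l :: real assume l: "l \<in> {0<..<1}"
    have "f ((1 - l) *\<^sub>R x + l *\<^sub>R y) \<le> (1 - l) * f x + l * f y"
      using l by (intro convex_onD[OF cv]) auto
    moreover have "(1 - l) *\<^sub>R x + l *\<^sub>R y = x + l *\<^sub>R d"
      by (simp add: d_def algebra_simps)
    ultimately have "\<phi> l - \<phi> 0 \<le> l * (f y - f x)"
      by (simp add: \<phi>_def algebra_simps)
    thus "(\<phi> l - \<phi> 0) / (l - 0) \<le> f y - f x"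
      using l by (simp add: divide_le_eq mult.commute)
  qed
  have "inner d (g x) \<le> f y - f x"
    by (rule tendsto_upperbound[OF L ev]) simp
  thus ?thesis by (simp add: d_def inner_commute)
qed

lemma descent:
  fixes f :: "'a::real_inner \<Rightarrow> real"
  assumes gd: "\<And>z. GDERIV f z :> g z" and lip: "L-lipschitz_on UNIV g"
  shows "f y \<le> f x + inner (g x) (y - x) + L / 2 * (norm (y - x))\<^sup>2"
proof -
  define d where "d = y - x"
  define h where "h = (\<lambda>l. f (x + l *\<^sub>R d) - l * inner (g x) d - L * l\<^sup>2 / 2 * (norm d)\<^sup>2)"
  have "h 1 \<le> h 0"
  proof (rule DERIV_nonpos_imp_nonincreasing[of 0 1 h])
    fix l :: real assume l: "0 \<le> l" "l \<le> 1"
    have "(h has_real_derivative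
        (inner d (g (x + l *\<^sub>R d)) - inner (g x) d - L * (2 * l) / 2 * (norm d)\<^sup>2)) (at l)"
    proof -
      have a: "((\<lambda>l. f (x + l *\<^sub>R d)) has_real_derivative inner d (g (x + l *\<^sub>R d))) (at l)"
        by (rule line_deriv[OF gd])
      have b: "((\<lambda>l. l * inner (g x) d) has_real_derivative inner (g x) d) (at l)"
        by (auto intro!: derivative_eq_intros)
      have c: "((\<lambda>l. L * l\<^sup>2 / 2 * (norm d)\<^sup>2) has_real_derivative L * (2 * l) / 2 * (norm d)\<^sup>2) (at l)"
        by (auto intro!: derivative_eq_intros)
      show ?thesis unfolding h_def by (intro DERIV_diff a b c)
    qed
    moreover have "inner d (g (x + l *\<^sub>R d)) - inner (g x) d - L * (2 * l) / 2 * (norm d)\<^sup>2 \<le> 0"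
    proof -
      have "inner d (g (x + l *\<^sub>R d)) - inner (g x) d = inner d (g (x + l *\<^sub>R d) - g x)"
        by (simp add: inner_diff_right inner_commute)
      also have "\<dots> \<le> norm d * norm (g (x + l *\<^sub>R d) - g x)"
        by (rule norm_cauchy_schwarz)
      also have "norm (g (x + l *\<^sub>R d) - g x) \<le> L * norm ((x + l *\<^sub>R d) - x)"
        using lipschitz_on_normD[OF lip] by blast
      hence "norm d * norm (g (x + l *\<^sub>R d) - g x) \<le> norm d * (L * (l * norm d))"
        using l by (intro mult_left_mono) auto
      finally show ?thesis by (simp add: power2_eq_square algebra_simps)
    qed
    ultimately show "\<exists>y. DERIV h l :> y \<and> y \<le> 0" by blast
  qed simp
  thus ?thesis by (simp add: h_def d_def algebra_simps)
qed

lemma baillon_haddad_pos: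
  fixes f :: "'a::real_inner \<Rightarrow> real"
  assumes cv: "convex_on UNIV f" and gd: "\<And>z. GDERIV f z :> g z" and M: "M > 0"
    and desc: "\<And>x y. f y \<le> f x + inner (g x) (y - x) + M / 2 * (norm (y - x))\<^sup>2"
  shows "(norm (g x - g y))\<^sup>2 \<le> M * inner (g x - g y) (x - y)"
proof -
  have key: "f a + inner (g a) (b - a) + (norm (g b - g a))\<^sup>2 / (2 * M) \<le> f b" for a b
  proof -
    define \<Delta> where "\<Delta> = g b - g a"
    define z where "z = b - (1 / M) *\<^sub>R \<Delta>"
    have 1: "f a + inner (g a) (z - a) \<le> f z" by (rule grad_ineq[OF cv gd])
    have 2: "f z \<le> f b + inner (g b) (z - b) + M / 2 * (norm (z - b))\<^sup>2" by (rule desc)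
    have "z - a = (b - a) - (1 / M) *\<^sub>R \<Delta>" "z - b = - ((1 / M) *\<^sub>R \<Delta>)"
      by (simp_all add: z_def)
    hence e1: "inner (g a) (z - a) = inner (g a) (b - a) - (1/M) * inner (g a) \<Delta>"
      and e2: "inner (g b) (z - b) = - (1/M) * inner (g b) \<Delta>"
      by (simp_all add: inner_diff_right)
    have "norm (z - b) = norm \<Delta> / M" using M by (simp add: z_def)
    hence e3: "(norm (z - b))\<^sup>2 = (1/M)\<^sup>2 * (norm \<Delta>)\<^sup>2"
      by (simp add: power_divide)
    have e4: "(norm \<Delta>)\<^sup>2 = inner (g b) \<Delta> - inner (g a) \<Delta>"
      by (simp add: \<Delta>_def power2_norm_eq_inner inner_diff_left inner_diff_right)
    from 1 2 have "f a + inner (g a) (b - a) - (1/M) * inner (g a) \<Delta>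
        \<le> f b - (1/M) * inner (g b) \<Delta> + M / 2 * ((1/M)\<^sup>2 * (norm \<Delta>)\<^sup>2)"
      unfolding e1 e2 e3 by linarith
    moreover have "M / 2 * ((1/M)\<^sup>2 * (norm \<Delta>)\<^sup>2) = (norm \<Delta>)\<^sup>2 / (2 * M)"
      using M by (simp add: power2_eq_square field_simps)
    moreover have "(1/M) * inner (g b) \<Delta> - (1/M) * inner (g a) \<Delta> = (norm \<Delta>)\<^sup>2 / M"
      using e4 by (simp add: diff_divide_distrib[symmetric])
    moreover have "(norm \<Delta>)\<^sup>2 / M = 2 * ((norm \<Delta>)\<^sup>2 / (2 * M))" by simp
    ultimately show ?thesis unfolding \<Delta>_def[symmetric] by linarith
  qed
  have A: "f x + inner (g x) (y - x) + (norm (g y - g x))\<^sup>2 / (2 * M) \<le> f y" by (rule key)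
  have B: "f y + inner (g y) (x - y) + (norm (g x - g y))\<^sup>2 / (2 * M) \<le> f x" by (rule key)
  have n: "norm (g y - g x) = norm (g x - g y)" by (rule norm_minus_commute)
  have i: "inner (g x) (y - x) + inner (g y) (x - y) = - inner (g x - g y) (x - y)"
    by (simp add: inner_diff_left inner_diff_right inner_commute)
  from A B n i have "(norm (g x - g y))\<^sup>2 / M \<le> inner (g x - g y) (x - y)"
    by (simp add: field_simps)
  thus ?thesis using M by (simp add: divide_le_eq mult.commute)
qed

lemma nd2: "(norm (a - b))\<^sup>2 = (norm a)\<^sup>2 - 2 * inner a (b::'a::real_inner) + (norm b)\<^sup>2"
  by (simp add: power2_norm_eq_inner inner_diff_left inner_diff_right inner_commute)

lemma grad_mono:
  fixes f :: "'a::real_inner \<Rightarrow> real"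
  assumes cv: "convex_on UNIV f" and gd: "\<And>z. GDERIV f z :> g z"
  shows "0 \<le> inner (g x - g y) (x - y)"
proof -
  have "f x + inner (g x) (y - x) \<le> f y" "f y + inner (g y) (x - y) \<le> f x"
    by (rule grad_ineq[OF cv gd])+
  moreover have "inner (g x) (y - x) + inner (g y) (x - y) = - inner (g x - g y) (x - y)"
    by (simp add: inner_diff_left inner_diff_right inner_commute)
  ultimately show ?thesis by linarith
qed

lemma eps_limit:
  fixes A B M :: real
  assumes "\<And>e. e > 0 \<Longrightarrow> B \<le> (M + e) * A" and "0 \<le> A"
  shows "B \<le> M * A"
proof (rule ccontr)
  assume "\<not> B \<le> M * A"
  hence d: "B - M * A > 0" by simp
  define e where "e = (B - M * A) / (2 * (A + 1))"
  have e: "e > 0" using d assms(2) by (simp add: e_def)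
  have "e * A \<le> e * (A + 1)" using e by simp
  also have "e * (A + 1) = (B - M * A) / 2"
  proof -
    have "A + 1 > 0" using assms(2) by simp
    thus ?thesis by (simp add: e_def field_simps)
  qed
  finally have "e * A < B - M * A" using d by (simp add: field_simps)
  with assms(1)[OF e] show False by (simp add: algebra_simps)
qed

lemma baillon_haddad:
  fixes f :: "'a::real_inner \<Rightarrow> real"
  assumes cv: "convex_on UNIV f" and gd: "\<And>z. GDERIV f z :> g z" and M: "M \<ge> 0"
    and desc: "\<And>x y. f y \<le> f x + inner (g x) (y - x) + M / 2 * (norm (y - x))\<^sup>2"
  shows "(norm (g x - g y))\<^sup>2 \<le> M * inner (g x - g y) (x - y)"
proof (rule eps_limit[OF _ grad_mono[OF cv gd]])
  fix e :: real assume e: "e > 0"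
  show "(norm (g x - g y))\<^sup>2 \<le> (M + e) * inner (g x - g y) (x - y)"
  proof (rule baillon_haddad_pos[OF cv gd])
    show "M + e > 0" using M e by simp
    fix a b :: 'a
    have "M / 2 * (norm (b - a))\<^sup>2 \<le> (M + e) / 2 * (norm (b - a))\<^sup>2"
      using e by (intro mult_right_mono) auto
    thus "f b \<le> f a + inner (g a) (b - a) + (M + e) / 2 * (norm (b - a))\<^sup>2"
      using desc[where x=a and y=b] by linarith
  qed
qed

lemma aux_lin: "(n::real) = a - 2 * t * q + x \<Longrightarrow> x \<le> y \<Longrightarrow> y \<le> t * q \<Longrightarrow> 0 \<le> y \<Longrightarrow> n \<le> a"
proof -
  assume "n = a - 2 * t * q + x" "x \<le> y" "y \<le> t * q" "0 \<le> y"
  moreover have "2 * t * q = 2 * (t * q)" by simp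
  ultimately show ?thesis by linarith
qed

lemma fwd_nonexp:
  fixes f :: "'a::real_inner \<Rightarrow> real"
  assumes cv: "convex_on UNIV f" and gd: "\<And>z. GDERIV f z :> g z"
    and L: "L > 0" and lip: "L-lipschitz_on UNIV g" and t: "0 < t" "t \<le> 1 / L"
  shows "norm ((x - t *\<^sub>R g x) - (y - t *\<^sub>R g y)) \<le> norm (x - y)"
proof -
  define D where "D = g x - g y"
  define d where "d = x - y"
  have BH: "(norm D)\<^sup>2 \<le> L * inner D d"
    unfolding D_def d_def
    by (rule baillon_haddad[OF cv gd]) (use L descent[OF gd lip] in auto)
  have e: "(x - t *\<^sub>R g x) - (y - t *\<^sub>R g y) = d - t *\<^sub>R D"
    by (simp add: D_def d_def algebra_simps)
  have "(norm (d - t *\<^sub>R D))\<^sup>2 = (norm d)\<^sup>2 - 2 * t * inner D d + t\<^sup>2 * (norm D)\<^sup>2"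
    unfolding nd2 using t by (simp add: inner_commute power_mult_distrib)
  moreover have "t\<^sup>2 * (norm D)\<^sup>2 \<le> t * (norm D)\<^sup>2 / L"
  proof -
    have "t * L \<le> 1" using t L by (simp add: field_simps)
    hence "t * (t * L) * (norm D)\<^sup>2 \<le> t * 1 * (norm D)\<^sup>2" using t
      by (intro mult_right_mono mult_left_mono) auto
    thus ?thesis using L by (simp add: field_simps power2_eq_square)
  qed
  moreover have "t * (norm D)\<^sup>2 / L \<le> t * inner D d"
    using BH L t by (simp add: field_simps)
  moreover have "0 \<le> t * (norm D)\<^sup>2 / L" using t L by simp
  ultimately have "(norm (d - t *\<^sub>R D))\<^sup>2 \<le> (norm d)\<^sup>2"
    by (rule aux_lin)
  hence "norm (d - t *\<^sub>R D) \<le> norm d" by (simp add: power2_le_iff_abs_le)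
  thus ?thesis using e by (simp only: d_def)
qed

lemma gderiv_sq_norm: "GDERIV (\<lambda>x::'a::real_inner. c * (norm x)\<^sup>2) x :> (2 * c) *\<^sub>R x"
  unfolding gderiv_def power2_norm_eq_inner
  by (auto intro!: derivative_eq_intros simp: inner_commute algebra_simps)

lemma S_contraction:
  fixes \<omega> :: "'a::euclidean_space \<Rightarrow> real"
  assumes sc: "strongly_convex \<mu> \<omega>" and \<mu>: "\<mu> > 0" and gd: "\<And>z. GDERIV \<omega> z :> g z"
    and L: "L > 0" and lip: "L-lipschitz_on UNIV g" and u: "0 < u" "u \<le> 2 / (L + \<mu>)"
  shows "\<exists>r. 0 \<le> r \<and> r < 1 \<and> (\<forall>x y. norm ((x - u *\<^sub>R g x) - (y - u *\<^sub>R g y)) \<le> r * norm (x - y))"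
proof -
  define h where "h = (\<lambda>x. \<omega> x - \<mu> / 2 * (norm x)\<^sup>2)"
  define gh where "gh = (\<lambda>x. g x - \<mu> *\<^sub>R x)"
  have hcv: "convex_on UNIV h" using sc unfolding strongly_convex_def h_def .
  have hgd: "GDERIV h z :> gh z" for z
    unfolding h_def gh_def using GDERIV_diff[OF gd gderiv_sq_norm[of "\<mu>/2" z]] by simp
  obtain e :: 'a where e0: "e \<noteq> 0" using nonzero_Basis nonempty_Basis by blast
  have "0 \<le> inner (gh e - gh 0) (e - 0)" by (rule grad_mono[OF hcv hgd])
  hence "\<mu> * (norm e)\<^sup>2 \<le> inner (g e - g 0) e"
    by (simp add: gh_def inner_diff_left power2_norm_eq_inner)
  also have "\<dots> \<le> norm (g e - g 0) * norm e" by (rule norm_cauchy_schwarz)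
  also have "\<dots> \<le> L * norm e * norm e"
    using lipschitz_on_normD[OF lip, of e 0] by (intro mult_right_mono) auto
  finally have "\<mu> * (norm e)\<^sup>2 \<le> L * (norm e)\<^sup>2" by (simp add: power2_eq_square)
  hence \<mu>L: "\<mu> \<le> L" using e0 by simp
  have hdesc: "h y \<le> h x + inner (gh x) (y - x) + (L - \<mu>) / 2 * (norm (y - x))\<^sup>2" for x y
  proof -
    have "\<omega> y \<le> \<omega> x + inner (g x) (y - x) + L / 2 * (norm (y - x))\<^sup>2"
      by (rule descent[OF gd lip])
    moreover have "(norm y)\<^sup>2 = (norm x)\<^sup>2 + 2 * inner x (y - x) + (norm (y - x))\<^sup>2"
      by (simp add: power2_norm_eq_inner inner_diff_left inner_diff_right inner_commute)
    moreover have "inner (gh x) (y - x) = inner (g x) (y - x) - \<mu> * inner x (y - x)"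
      by (simp add: gh_def inner_diff_left)
    moreover have "\<mu> / 2 * (norm y)\<^sup>2 = \<mu> / 2 * (norm x)\<^sup>2 + \<mu> * inner x (y - x) + \<mu> / 2 * (norm (y - x))\<^sup>2"
    proof -
      have "\<mu> / 2 * (norm y)\<^sup>2 = \<mu> / 2 * ((norm x)\<^sup>2 + 2 * inner x (y - x) + (norm (y - x))\<^sup>2)"
        using calculation(2) by simp
      thus ?thesis by (simp add: algebra_simps)
    qed
    moreover have "(L - \<mu>) / 2 * (norm (y - x))\<^sup>2 = L / 2 * (norm (y - x))\<^sup>2 - \<mu> / 2 * (norm (y - x))\<^sup>2"
      by (simp add: left_diff_distrib diff_divide_distrib)
    ultimately show ?thesis unfolding h_def by linarith
  qed
  define c where "c = 2 * u * \<mu> * L / (L + \<mu>)"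
  have c0: "0 < c" using u \<mu> L by (simp add: c_def)
  have c1: "c \<le> 1"
  proof -
    have "c \<le> 2 * (2 / (L + \<mu>)) * \<mu> * L / (L + \<mu>)"
      unfolding c_def using u \<mu> L by (intro divide_right_mono mult_right_mono) auto
    also have "\<dots> = 4 * \<mu> * L / (L + \<mu>)\<^sup>2" by (simp add: power2_eq_square)
    also have "\<dots> \<le> 1"
    proof -
      have "(L + \<mu>)\<^sup>2 - 4 * \<mu> * L = (L - \<mu>)\<^sup>2" by (simp add: power2_eq_square algebra_simps)
      hence "4 * \<mu> * L \<le> (L + \<mu>)\<^sup>2" using zero_le_power2[of "L - \<mu>"] by linarith
      thus ?thesis using \<mu> L by (simp add: divide_le_eq)
    qed
    finally show ?thesis .
  qed
  define r where "r = sqrt (1 - c)"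
  have main: "(norm ((x - u *\<^sub>R g x) - (y - u *\<^sub>R g y)))\<^sup>2 \<le> (1 - c) * (norm (x - y))\<^sup>2" for x y
  proof -
    define D where "D = g x - g y"
    define d where "d = x - y"
    have BH: "(norm (gh x - gh y))\<^sup>2 \<le> (L - \<mu>) * inner (gh x - gh y) (x - y)"
      by (rule baillon_haddad[OF hcv hgd]) (use \<mu>L hdesc in auto)
    have ghd: "gh x - gh y = D - \<mu> *\<^sub>R d" by (simp add: gh_def D_def d_def algebra_simps)
    have n1: "(norm (D - \<mu> *\<^sub>R d))\<^sup>2 = (norm D)\<^sup>2 - 2 * \<mu> * inner D d + \<mu>\<^sup>2 * (norm d)\<^sup>2"
      unfolding nd2 using \<mu> by (simp add: power_mult_distrib)
    have i1: "inner (D - \<mu> *\<^sub>R d) d = inner D d - \<mu> * (norm d)\<^sup>2"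
      by (simp add: inner_diff_left power2_norm_eq_inner)
    from BH have "(norm D)\<^sup>2 - 2 * \<mu> * inner D d + \<mu>\<^sup>2 * (norm d)\<^sup>2
        \<le> (L - \<mu>) * (inner D d - \<mu> * (norm d)\<^sup>2)"
      unfolding ghd n1 d_def[symmetric] i1 .
    hence key: "(norm D)\<^sup>2 + \<mu> * L * (norm d)\<^sup>2 \<le> (L + \<mu>) * inner D d"
      by (simp add: algebra_simps power2_eq_square)
    have e: "(x - u *\<^sub>R g x) - (y - u *\<^sub>R g y) = d - u *\<^sub>R D"
      by (simp add: D_def d_def algebra_simps)
    have n2: "(norm (d - u *\<^sub>R D))\<^sup>2 = (norm d)\<^sup>2 - 2 * u * inner D d + u\<^sup>2 * (norm D)\<^sup>2"
      unfolding nd2 using u by (simp add: inner_commute power_mult_distrib)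
    have a1: "2 * u * inner D d \<ge> 2 * u * ((norm D)\<^sup>2 + \<mu> * L * (norm d)\<^sup>2) / (L + \<mu>)"
    proof -
      have "((norm D)\<^sup>2 + \<mu> * L * (norm d)\<^sup>2) / (L + \<mu>) \<le> inner D d"
        using key \<mu> L by (simp add: divide_le_eq mult.commute)
      hence "2 * u * (((norm D)\<^sup>2 + \<mu> * L * (norm d)\<^sup>2) / (L + \<mu>)) \<le> 2 * u * inner D d"
        using u by (intro mult_left_mono) auto
      thus ?thesis by (simp only: times_divide_eq_right)
    qed
    have a2: "u\<^sup>2 * (norm D)\<^sup>2 \<le> 2 * u * (norm D)\<^sup>2 / (L + \<mu>)"
    proof -
      have "u * (u * (norm D)\<^sup>2) \<le> (2 / (L + \<mu>)) * (u * (norm D)\<^sup>2)"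
        using u by (intro mult_right_mono) auto
      thus ?thesis by (simp add: power2_eq_square)
    qed
    have a3: "2 * u * ((norm D)\<^sup>2 + \<mu> * L * (norm d)\<^sup>2) / (L + \<mu>)
        = 2 * u * (norm D)\<^sup>2 / (L + \<mu>) + c * (norm d)\<^sup>2"
    proof -
      have "2 * u * ((norm D)\<^sup>2 + \<mu> * L * (norm d)\<^sup>2) / (L + \<mu>)
          = 2 * u * (norm D)\<^sup>2 / (L + \<mu>) + 2 * u * (\<mu> * L * (norm d)\<^sup>2) / (L + \<mu>)"
        by (simp add: distrib_left add_divide_distrib)
      moreover have "2 * u * (\<mu> * L * (norm d)\<^sup>2) / (L + \<mu>) = c * (norm d)\<^sup>2"
        by (simp add: c_def ac_simps)
      ultimately show ?thesis by simp
    qed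
    have a4: "(1 - c) * (norm d)\<^sup>2 = (norm d)\<^sup>2 - c * (norm d)\<^sup>2" by (simp add: algebra_simps)
    show ?thesis unfolding e n2 d_def[symmetric] a4 using a1 a2 a3 by linarith
  qed
  show ?thesis
  proof (intro exI conjI allI)
    show "0 \<le> r" using c1 by (simp add: r_def)
    show "r < 1" using c0 c1 by (simp add: r_def)
    fix x y
    have "(norm ((x - u *\<^sub>R g x) - (y - u *\<^sub>R g y)))\<^sup>2 \<le> (r * norm (x - y))\<^sup>2"
      using main[of x y] c1 by (simp add: r_def power_mult_distrib)
    thus "norm ((x - u *\<^sub>R g x) - (y - u *\<^sub>R g y)) \<le> r * norm (x - y)"
    proof (rule power2_le_imp_le)
      show "0 \<le> r * norm (x - y)" using c1 by (simp add: r_def)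
    qed
  qed
qed

lemma quad_ident:
  fixes a b :: "'a::real_inner"
  shows "(norm ((1 - l) *\<^sub>R a + l *\<^sub>R b))\<^sup>2
    = (1 - l) * (norm a)\<^sup>2 + l * (norm b)\<^sup>2 - l * (1 - l) * (norm (a - b))\<^sup>2"
proof -
  have 1: "(norm ((1 - l) *\<^sub>R a + l *\<^sub>R b))\<^sup>2 = (1 - l) * (1 - l) * inner a a + 2 * (1 - l) * l * inner a b + l * l * inner b b"
    by (simp add: power2_norm_eq_inner inner_add_left inner_add_right inner_commute algebra_simps)
  have 2: "(norm (a - b))\<^sup>2 = inner a a - 2 * inner a b + inner b b"
    by (simp add: power2_norm_eq_inner inner_diff_left inner_diff_right inner_commute)
  show ?thesis unfolding 1 2 by (simp add: power2_norm_eq_inner) algebra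
qed

lemma quad_ident_x:
  fixes a b x :: "'a::real_inner"
  shows "(norm ((1 - l) *\<^sub>R a + l *\<^sub>R b - x))\<^sup>2
    = (1 - l) * (norm (a - x))\<^sup>2 + l * (norm (b - x))\<^sup>2 - l * (1 - l) * (norm (a - b))\<^sup>2"
proof -
  have "(1 - l) *\<^sub>R a + l *\<^sub>R b - x = (1 - l) *\<^sub>R (a - x) + l *\<^sub>R (b - x)"
    by (simp add: algebra_simps)
  moreover have "(a - x) - (b - x) = a - b" by simp
  ultimately show ?thesis using quad_ident[of l "a - x" "b - x"] by simp
qed

lemma lscR_min_compact:
  fixes G :: "'a::metric_space \<Rightarrow> ereal"
  assumes K: "compact K" "K \<noteq> {}"
    and lsc: "\<And>X q y. (\<forall>n. X n \<in> K) \<Longrightarrow> X \<longlonglongrightarrow> q \<Longrightarrow> ereal y < G q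
               \<Longrightarrow> eventually (\<lambda>n. ereal y < G (X n)) sequentially"
  shows "\<exists>p\<in>K. \<forall>v\<in>K. G p \<le> G v"
proof -
  obtain u where u: "\<forall>n. u n \<in> G ` K" "u \<longlonglongrightarrow> Inf (G ` K)"
    using Inf_as_limit[of "G ` K"] K(2) by blast
  have "\<forall>n. \<exists>y. y \<in> K \<and> G y = u n" using u(1) by (metis imageE)
  hence "\<exists>X. \<forall>n. X n \<in> K \<and> G (X n) = u n" by (rule choice)
  then obtain X where X: "\<And>n. X n \<in> K" "\<And>n. G (X n) = u n" by blast
  obtain q r where qr: "q \<in> K" "strict_mono (r :: nat \<Rightarrow> nat)" "(X \<circ> r) \<longlonglongrightarrow> q"
    using seq_compactE[OF compact_imp_seq_compact[OF K(1)], of X] X(1) by blast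
  have "G q \<le> Inf (G ` K)"
  proof (rule ccontr)
    assume "\<not> G q \<le> Inf (G ` K)"
    hence "Inf (G ` K) < G q" by simp
    then obtain y where y: "Inf (G ` K) < ereal y" "ereal y < G q"
      using ereal_dense2 by blast
    have e1: "eventually (\<lambda>n. ereal y < G ((X \<circ> r) n)) sequentially"
      using lsc[OF _ qr(3) y(2)] X(1) by simp
    have "(u \<circ> r) \<longlonglongrightarrow> Inf (G ` K)" using LIMSEQ_subseq_LIMSEQ[OF u(2) qr(2)] .
    hence e2: "eventually (\<lambda>n. (u \<circ> r) n < ereal y) sequentially"
      using order_tendstoD(2) y(1) by blast
    from e1 e2 have "eventually (\<lambda>n. False) sequentially"
      by eventually_elim (auto simp: X(2))
    thus False by simp
  qed
  moreover have "\<forall>v\<in>K. Inf (G ` K) \<le> G v" by (simp add: INF_lower)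
  ultimately show ?thesis using qr(1) by (meson order_trans)
qed

lemma ereal_less_add_real: "ereal z < a \<Longrightarrow> ereal (z + c) < a + ereal c"
  by (cases a) auto

lemma limit_l_zero:
  fixes A B C :: real
  assumes "\<And>l. 0 < l \<Longrightarrow> l < 1 \<Longrightarrow> A \<le> B + l * C" "0 \<le> C"
  shows "A \<le> B"
proof (rule ccontr)
  assume "\<not> A \<le> B"
  hence d: "A - B > 0" by simp
  define l where "l = min (1/2) ((A - B) / (2 * (C + 1)))"
  have l: "0 < l" "l < 1" using d assms(2) by (auto simp: l_def)
  have "l * C \<le> l * (C + 1)" using l by simp
  also have "l * (C + 1) \<le> ((A - B) / (2 * (C + 1))) * (C + 1)"
    using assms(2) by (intro mult_right_mono) (auto simp: l_def)
  also have "\<dots> = (A - B) / 2" using assms(2) by (simp add: field_simps)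
  finally have "l * C < A - B" using d by simp
  with assms(1)[OF l] show False by linarith
qed

lemma lin_aux:
  fixes hp hv P V D l :: real
  assumes "hp + P / 2 \<le> (1 - l) * hp + l * hv + ((1 - l) * P + l * V - l * (1 - l) * D) / 2" "0 < l"
  shows "hp + P / 2 + D / 2 \<le> hv + V / 2 + l * (D / 2)"
proof -
  have e: "((1 - l) * hp + l * hv + ((1 - l) * P + l * V - l * (1 - l) * D) / 2) - (hp + P / 2)
      = l * ((hv + V / 2 + l * (D / 2)) - (hp + P / 2 + D / 2))"
    by (simp add: field_simps)
  have "0 \<le> l * ((hv + V / 2 + l * (D / 2)) - (hp + P / 2 + D / 2))"
    using assms(1) unfolding e[symmetric] by simp
  thus ?thesis using assms(2) by (simp add: zero_le_mult_iff)
qed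

lemma firm_alg:
  fixes p q x y :: "'a::real_inner"
  assumes "(norm (p - x))\<^sup>2 + (norm (q - y))\<^sup>2 + 2 * (norm (p - q))\<^sup>2 \<le> (norm (q - x))\<^sup>2 + (norm (p - y))\<^sup>2"
  shows "norm (p - q) \<le> norm (x - y)"
proof -
  have "(norm (q - x))\<^sup>2 + (norm (p - y))\<^sup>2 - (norm (p - x))\<^sup>2 - (norm (q - y))\<^sup>2 = 2 * inner (p - q) (x - y)"
    by (simp add: power2_norm_eq_inner inner_diff_left inner_diff_right inner_commute)
  with assms have "(norm (p - q))\<^sup>2 \<le> inner (p - q) (x - y)" by argo
  also have "\<dots> \<le> norm (p - q) * norm (x - y)" by (rule norm_cauchy_schwarz)
  finally have "norm (p - q) * norm (p - q) \<le> norm (p - q) * norm (x - y)" by (simp add: power2_eq_square)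
  thus ?thesis by (cases "norm (p - q) = 0") (auto simp: mult_le_cancel_left)
qed

locale proxfun =
  fixes h :: "'a::euclidean_space \<Rightarrow> ereal"
  assumes nminf: "\<And>v. h v \<noteq> -\<infinity>"
    and dom: "\<exists>v. h v < \<infinity>"
    and lscR: "\<And>X q y. X \<longlonglongrightarrow> q \<Longrightarrow> ereal y < h q \<Longrightarrow> eventually (\<lambda>n. ereal y < h (X n)) sequentially"
    and cvx: "convex_efun h"
begin

definition G :: "'a \<Rightarrow> 'a \<Rightarrow> ereal" where
  "G x v = h v + ereal ((norm (v - x))\<^sup>2 / 2)"

lemma G_lsc:
  assumes X: "X \<longlonglongrightarrow> q" and y: "ereal y < G x q"
  shows "eventually (\<lambda>n. ereal y < G x (X n)) sequentially"
proof -
  define c where "c = (\<lambda>v. (norm (v - x))\<^sup>2 / 2)"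
  have "ereal (y - c q) < h q"
    using y unfolding G_def by (cases "h q") (auto simp: c_def)
  then obtain z where z: "ereal (y - c q) < ereal z" "ereal z < h q"
    using ereal_dense2 by blast
  have e1: "eventually (\<lambda>n. ereal z < h (X n)) sequentially" by (rule lscR[OF X z(2)])
  have "(\<lambda>n. c (X n)) \<longlonglongrightarrow> c q"
    unfolding c_def by (auto intro!: tendsto_intros X)
  moreover have "y - z < c q" using z(1) by simp
  ultimately have e2: "eventually (\<lambda>n. y - z < c (X n)) sequentially"
    using order_tendstoD(1) by blast
  from e1 e2 show ?thesis
  proof eventually_elim
    case (elim n)
    have "ereal y < ereal (z + c (X n))" using elim(2) by simp
    also have "\<dots> < h (X n) + ereal (c (X n))" by (rule ereal_less_add_real[OF elim(1)])
    finally show ?case by (simp add: G_def c_def)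
  qed
qed

lemma cvx_real:
  assumes "h a = ereal ha" "h b = ereal hb" "0 < l" "l < 1"
  shows "h ((1 - l) *\<^sub>R a + l *\<^sub>R b) \<le> ereal ((1 - l) * ha + l * hb)"
  using cvx assms unfolding convex_efun_def by (metis times_ereal.simps(1) plus_ereal.simps(1))

lemma prox_exists: "\<exists>p. \<forall>v. G x p \<le> G x v"
proof -
  obtain v0 where v0: "h v0 < \<infinity>" using dom by blast
  then obtain hv0 where hv0: "h v0 = ereal hv0" using nminf[of v0] by (cases "h v0") auto
  define c0 where "c0 = hv0 + (norm (v0 - x))\<^sup>2 / 2"
  have Gv0: "G x v0 = ereal c0" by (simp add: G_def hv0 c0_def)
  obtain e :: 'a where e: "norm e = 1" using vector_choose_size[of 1] by auto
  have "\<exists>s\<in>sphere v0 1. \<forall>v\<in>sphere v0 1. G x s \<le> G x v"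
  proof (rule lscR_min_compact)
    show "sphere v0 1 \<noteq> {}" using e by (auto intro!: exI[of _ "v0 + e"] simp: dist_norm)
    fix X q y assume "\<forall>n. X n \<in> sphere v0 1" "X \<longlonglongrightarrow> q" "ereal y < G x q"
    thus "eventually (\<lambda>n. ereal y < G x (X n)) sequentially" using G_lsc by blast
  qed simp
  then obtain s0 where s0: "\<And>v. v \<in> sphere v0 1 \<Longrightarrow> G x s0 \<le> G x v" by blast
  define m1 where "m1 = real_of_ereal (G x s0)"
  define R0 where "R0 = 2 + 2 * \<bar>c0 - m1\<bar>"
  have R0pos: "0 \<le> R0" unfolding R0_def using abs_ge_zero[of "c0 - m1"] by argo
  have bnd: "norm (p - v0) \<le> R0" if Gp: "G x p \<le> ereal c0" for p
  proof (rule ccontr)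
    assume nb: "\<not> norm (p - v0) \<le> R0"
    define R where "R = norm (p - v0)"
    have R1: "R > 1" using nb abs_ge_zero[of "c0 - m1"] unfolding R_def R0_def by argo
    define l where "l = 1 / R"
    have l: "0 < l" "l < 1" using R1 by (auto simp: l_def)
    have "h p \<noteq> \<infinity>" using Gp by (auto simp: G_def)
    then obtain hp where hp: "h p = ereal hp" using nminf[of p] by (cases "h p") auto
    have Gpr: "hp + (norm (p - x))\<^sup>2 / 2 \<le> c0" using Gp by (simp add: G_def hp)
    define z where "z = (1 - l) *\<^sub>R v0 + l *\<^sub>R p"
    have "z - v0 = l *\<^sub>R (p - v0)" by (simp add: z_def algebra_simps)
    hence "norm (z - v0) = 1" using R1 by (auto simp: l_def R_def)
    hence "dist v0 z = 1" by (simp add: dist_norm norm_minus_commute)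
    hence "G x s0 \<le> G x z" using s0 by simp
    also have "G x z \<le> ereal ((1 - l) * hv0 + l * hp) + ereal ((norm (z - x))\<^sup>2 / 2)"
      unfolding G_def z_def by (rule add_right_mono[OF cvx_real[OF hv0 hp l]])
    also have "(norm (z - x))\<^sup>2 = (1 - l) * (norm (v0 - x))\<^sup>2 + l * (norm (p - x))\<^sup>2 - l * (1 - l) * R\<^sup>2"
      unfolding z_def R_def quad_ident_x by (simp only: norm_minus_commute[of v0 p])
    finally have "G x s0 \<le> ereal ((1 - l) * c0 + l * (hp + (norm (p - x))\<^sup>2 / 2) - l * (1 - l) * R\<^sup>2 / 2)"
      by (simp add: c0_def algebra_simps add_divide_distrib diff_divide_distrib)
    also have "\<dots> \<le> ereal (c0 - l * (1 - l) * R\<^sup>2 / 2)"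
    proof -
      have "l * (hp + (norm (p - x))\<^sup>2 / 2) \<le> l * c0" using Gpr l by (intro mult_left_mono) auto
      thus ?thesis by (simp add: algebra_simps)
    qed
    also have "l * (1 - l) * R\<^sup>2 / 2 = (R - 1) / 2" using R1
      by (simp add: l_def power2_eq_square field_simps)
    finally have A: "G x s0 \<le> ereal (c0 - (R - 1) / 2)" .
    have "G x s0 \<noteq> -\<infinity>" using nminf[of s0] by (simp add: G_def)
    with A have "G x s0 = ereal m1" unfolding m1_def by (cases "G x s0") auto
    with A have "m1 \<le> c0 - (R - 1) / 2" by simp
    hence "R \<le> 1 + 2 * (c0 - m1)" by argo
    moreover have "c0 - m1 \<le> \<bar>c0 - m1\<bar>" by simp
    ultimately show False using nb unfolding R_def R0_def by argo
  qed
  have "\<exists>p\<in>cball v0 R0. \<forall>v\<in>cball v0 R0. G x p \<le> G x v"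
  proof (rule lscR_min_compact)
    show "cball v0 R0 \<noteq> {}" using R0pos by simp
    fix X q y assume "\<forall>n. X n \<in> cball v0 R0" "X \<longlonglongrightarrow> q" "ereal y < G x q"
    thus "eventually (\<lambda>n. ereal y < G x (X n)) sequentially" using G_lsc by blast
  qed simp
  then obtain p where p: "p \<in> cball v0 R0" "\<And>v. v \<in> cball v0 R0 \<Longrightarrow> G x p \<le> G x v" by blast
  have v0in: "v0 \<in> cball v0 R0" using R0pos by simp
  have "G x p \<le> G x v" for v
  proof (cases "v \<in> cball v0 R0")
    case True thus ?thesis by (rule p(2))
  next
    case False
    hence "\<not> G x v \<le> ereal c0" using bnd[of v] by (auto simp: dist_norm norm_minus_commute)
    hence "ereal c0 < G x v" by simp
    moreover have "G x p \<le> ereal c0" using p(2)[OF v0in] Gv0 by simp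
    ultimately show ?thesis by simp
  qed
  thus ?thesis by blast
qed

lemma prox_min: "G x (prox h x) \<le> G x v"
proof -
  have "\<forall>v. G x (prox h x) \<le> G x v"
    unfolding prox_def G_def[symmetric] using someI_ex[OF prox_exists] by blast
  thus ?thesis by blast
qed

lemma prox_fin: "\<exists>hp. h (prox h x) = ereal hp"
proof -
  obtain v0 where v0: "h v0 < \<infinity>" using dom by blast
  have "G x (prox h x) \<le> G x v0" by (rule prox_min)
  hence "h (prox h x) \<noteq> \<infinity>" using v0 by (auto simp: G_def)
  thus ?thesis using nminf[of "prox h x"] by (cases "h (prox h x)") auto
qed

lemma prox_strong:
  assumes hp: "h (prox h x) = ereal hp" and hv: "h v = ereal hv"
  shows "hp + (norm (prox h x - x))\<^sup>2 / 2 + (norm (prox h x - v))\<^sup>2 / 2 \<le> hv + (norm (v - x))\<^sup>2 / 2"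
proof -
  define p where "p = prox h x"
  have hp': "h p = ereal hp" using hp by (simp add: p_def)
  have "hp + (norm (p - x))\<^sup>2 / 2 + (norm (p - v))\<^sup>2 / 2 \<le> hv + (norm (v - x))\<^sup>2 / 2 + l * ((norm (p - v))\<^sup>2 / 2)"
    if l: "0 < l" "l < 1" for l
  proof -
    define z where "z = (1 - l) *\<^sub>R p + l *\<^sub>R v"
    have "G x p \<le> G x z" unfolding p_def by (rule prox_min)
    also have "G x z \<le> ereal ((1 - l) * hp + l * hv) + ereal ((norm (z - x))\<^sup>2 / 2)"
      unfolding G_def z_def by (rule add_right_mono[OF cvx_real[OF hp' hv l]])
    finally have "hp + (norm (p - x))\<^sup>2 / 2 \<le> (1 - l) * hp + l * hv + (norm (z - x))\<^sup>2 / 2"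
      by (simp add: G_def hp')
    also have "(norm (z - x))\<^sup>2 = (1 - l) * (norm (p - x))\<^sup>2 + l * (norm (v - x))\<^sup>2 - l * (1 - l) * (norm (p - v))\<^sup>2"
      unfolding z_def by (rule quad_ident_x)
    finally show ?thesis using l(1) by (rule lin_aux)
  qed
  hence "hp + (norm (p - x))\<^sup>2 / 2 + (norm (p - v))\<^sup>2 / 2 \<le> hv + (norm (v - x))\<^sup>2 / 2"
    by (rule limit_l_zero[of _ _ "(norm (p - v))\<^sup>2 / 2"]) auto
  thus ?thesis by (simp add: p_def)
qed

lemma prox_nonexp: "norm (prox h x - prox h y) \<le> norm (x - y)"
proof -
  obtain hp where hp: "h (prox h x) = ereal hp" using prox_fin by blast
  obtain hq where hq: "h (prox h y) = ereal hq" using prox_fin by blast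
  have 1: "hp + (norm (prox h x - x))\<^sup>2 / 2 + (norm (prox h x - prox h y))\<^sup>2 / 2 \<le> hq + (norm (prox h y - x))\<^sup>2 / 2"
    by (rule prox_strong[OF hp hq])
  have 2: "hq + (norm (prox h y - y))\<^sup>2 / 2 + (norm (prox h y - prox h x))\<^sup>2 / 2 \<le> hp + (norm (prox h x - y))\<^sup>2 / 2"
    by (rule prox_strong[OF hq hp])
  have 3: "(norm (prox h y - prox h x))\<^sup>2 = (norm (prox h x - prox h y))\<^sup>2" by (simp add: norm_minus_commute)
  show ?thesis
    by (rule firm_alg) (use 1 2 3 in linarith)
qed

end

lemma proxfun_scaled:
  fixes g :: "'a::euclidean_space \<Rightarrow> ereal"
  assumes pr: "proper_fun g" and ls: "lsc_fun g" and cv: "convex_efun g" and t: "t > 0"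
  shows "proxfun (\<lambda>z. ereal t * g z)"
proof
  fix v
  have "g v \<noteq> -\<infinity>" using pr unfolding proper_fun_def by blast
  thus "ereal t * g v \<noteq> -\<infinity>" using t by (cases "g v") auto
next
  obtain v where "g v < \<infinity>" using pr unfolding proper_fun_def by blast
  hence "ereal t * g v < \<infinity>" using t by (cases "g v") auto
  thus "\<exists>v. ereal t * g v < \<infinity>" by blast
next
  fix X q y assume X: "X \<longlonglongrightarrow> q" and y: "ereal y < ereal t * g q"
  have "ereal (y / t) < g q" using y t by (cases "g q") (auto simp: field_simps)
  also have "g q \<le> liminf (\<lambda>k. g (X k))" using ls X unfolding lsc_fun_def by blast
  finally have "eventually (\<lambda>n. ereal (y / t) < g (X n)) sequentially"
    by (rule less_LiminfD)
  thus "eventually (\<lambda>n. ereal y < ereal t * g (X n)) sequentially"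
  proof eventually_elim
    case (elim n)
    thus ?case using t by (cases "g (X n)") (auto simp: field_simps)
  qed
next
  show "convex_efun (\<lambda>z. ereal t * g z)"
    unfolding convex_efun_def
  proof (intro allI impI)
    fix x y :: 'a and l :: real assume l: "0 < l \<and> l < 1"
    have nx: "g x \<noteq> -\<infinity>" "g y \<noteq> -\<infinity>" "g ((1 - l) *\<^sub>R x + l *\<^sub>R y) \<noteq> -\<infinity>"
      using pr unfolding proper_fun_def by blast+
    have c: "g ((1 - l) *\<^sub>R x + l *\<^sub>R y) \<le> ereal (1 - l) * g x + ereal l * g y"
      using cv l unfolding convex_efun_def by blast
    show "ereal t * g ((1 - l) *\<^sub>R x + l *\<^sub>R y)
          \<le> ereal (1 - l) * (ereal t * g x) + ereal l * (ereal t * g y)"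
    proof (cases "g x")
      case (real a) note a = this
      show ?thesis
      proof (cases "g y")
        case (real b)
        obtain cc where cc: "g ((1 - l) *\<^sub>R x + l *\<^sub>R y) = ereal cc"
          using c nx(3) a real by (cases "g ((1 - l) *\<^sub>R x + l *\<^sub>R y)") auto
        have "cc \<le> (1 - l) * a + l * b" using c cc a real by simp
        hence "t * cc \<le> t * ((1 - l) * a + l * b)" using t by (intro mult_left_mono) auto
        thus ?thesis using cc a real by (simp add: algebra_simps)
      next
        case PInf thus ?thesis using l t a by simp
      next
        case MInf thus ?thesis using nx by simp
      qed
    next
      case PInf
      show ?thesis
      proof (cases "g y")
        case (real b) thus ?thesis using l t PInf by simp
      next
        case PInf thus ?thesis using l t \<open>g x = \<infinity>\<close> by simp
      next
        case MInf thus ?thesis using nx by simp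
      qed
    next
      case MInf thus ?thesis using nx by simp
    qed
  qed
qed

lemma fb_nonexp:
  fixes f :: "'a::euclidean_space \<Rightarrow> real" and g :: "'a \<Rightarrow> ereal"
  assumes cv: "convex_on UNIV f" and gd: "\<And>z. GDERIV f z :> gf z"
    and L: "L > 0" and lip: "L-lipschitz_on UNIV gf" and t: "0 < t" "t \<le> 1 / L"
    and pr: "proper_fun g" and ls: "lsc_fun g" and cvg: "convex_efun g"
  shows "norm (prox (\<lambda>z. ereal t * g z) (x - t *\<^sub>R gf x) - prox (\<lambda>z. ereal t * g z) (y - t *\<^sub>R gf y))
         \<le> norm (x - y)"
proof -
  interpret proxfun "\<lambda>z. ereal t * g z" by (rule proxfun_scaled[OF pr ls cvg t(1)])
  show ?thesis
    using prox_nonexp[of "x - t *\<^sub>R gf x" "y - t *\<^sub>R gf y"] fwd_nonexp[OF cv gd L lip t, of x y]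
    by linarith
qed

definition nonexp :: "('a::real_normed_vector \<Rightarrow> 'a) \<Rightarrow> bool" where
  "nonexp N \<longleftrightarrow> (\<forall>x y. norm (N x - N y) \<le> norm (x - y))"

lemma nonexp_cont: "nonexp N \<Longrightarrow> continuous_on UNIV N"
  unfolding nonexp_def
  by (intro lipschitz_on_continuous_on[of 1] lipschitz_onI) (auto simp: dist_norm)

lemma nonexp_isCont: "nonexp N \<Longrightarrow> isCont N x"
  using nonexp_cont continuous_on_eq_continuous_at open_UNIV by blast

lemma fix_closed: "nonexp W \<Longrightarrow> closed (fixpts W)"
  unfolding fixpts_def by (intro closed_Collect_eq nonexp_cont continuous_on_id)

lemma fix_convex:
  fixes W :: "'a::real_inner \<Rightarrow> 'a"
  assumes W: "nonexp W" shows "convex (fixpts W)"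
  unfolding convex_alt
proof (intro ballI allI impI)
  fix x y and l :: real assume x: "x \<in> fixpts W" and y: "y \<in> fixpts W" and l: "0 \<le> l \<and> l \<le> 1"
  define z where "z = (1 - l) *\<^sub>R x + l *\<^sub>R y"
  define w where "w = W z"
  have Wx: "W x = x" and Wy: "W y = y" using x y by (auto simp: fixpts_def)
  have "norm (w - x) \<le> norm (z - x)" using W Wx unfolding nonexp_def w_def by metis
  also have "z - x = l *\<^sub>R (y - x)" by (simp add: z_def algebra_simps)
  finally have a: "norm (w - x) \<le> l * norm (y - x)" using l by simp
  have "norm (w - y) \<le> norm (z - y)" using W Wy unfolding nonexp_def w_def by metis
  also have "z - y = (1 - l) *\<^sub>R (x - y)" by (simp add: z_def algebra_simps)
  finally have b: "norm (w - y) \<le> (1 - l) * norm (y - x)" using l by (simp add: norm_minus_commute)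
  have a2: "(norm (w - x))\<^sup>2 \<le> l\<^sup>2 * (norm (y - x))\<^sup>2"
    using a power_mono[OF a, of 2] by (simp add: power_mult_distrib)
  have b2: "(norm (w - y))\<^sup>2 \<le> (1 - l)\<^sup>2 * (norm (y - x))\<^sup>2"
    using b power_mono[OF b, of 2] by (simp add: power_mult_distrib)
  have "w - z = (1 - l) *\<^sub>R (w - x) + l *\<^sub>R (w - y)" by (simp add: z_def algebra_simps)
  hence "(norm (w - z))\<^sup>2 = (1 - l) * (norm (w - x))\<^sup>2 + l * (norm (w - y))\<^sup>2 - l * (1 - l) * (norm (x - y))\<^sup>2"
    using quad_ident[of l "w - x" "w - y"] by (simp add: norm_minus_commute)
  also have "\<dots> \<le> (1 - l) * (l\<^sup>2 * (norm (y - x))\<^sup>2) + l * ((1 - l)\<^sup>2 * (norm (y - x))\<^sup>2) - l * (1 - l) * (norm (x - y))\<^sup>2"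
    using l a2 b2 by (intro diff_right_mono add_mono mult_left_mono) auto
  also have "\<dots> = 0" by (simp add: norm_minus_commute power2_eq_square algebra_simps)
  finally have "w = z" by simp
  thus "(1 - l) *\<^sub>R x + l *\<^sub>R y \<in> fixpts W" by (simp add: fixpts_def w_def z_def)
qed

definition VIset :: "('a::real_inner \<Rightarrow> 'a) \<Rightarrow> 'a set \<Rightarrow> 'a set" where
  "VIset T F = {y \<in> F. \<forall>z \<in> F. inner (y - T y) (z - y) \<ge> 0}"

lemma VI_closed:
  assumes T: "nonexp T" and F: "closed F"
  shows "closed (VIset T F)"
proof -
  have "VIset T F = F \<inter> (\<Inter>z\<in>F. {y. 0 \<le> inner (y - T y) (z - y)})"
    unfolding VIset_def by auto
  moreover have "closed {y. 0 \<le> inner (y - T y) (z - y)}" for z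
    by (intro closed_Collect_le continuous_intros nonexp_cont[OF T])
  ultimately show ?thesis using F by (simp add: closed_INT closed_Int)
qed

lemma VI_minty:
  assumes T: "nonexp T" and F: "convex F"
  shows "VIset T F = {y \<in> F. \<forall>z \<in> F. inner (z - T z) (z - y) \<ge> 0}"
proof (intro set_eqI iffI)
  fix y assume y: "y \<in> VIset T F"
  show "y \<in> {y \<in> F. \<forall>z \<in> F. inner (z - T z) (z - y) \<ge> 0}"
  proof (safe)
    show "y \<in> F" using y by (simp add: VIset_def)
    fix z assume z: "z \<in> F"
    have 1: "0 \<le> inner (y - T y) (z - y)" using y z by (simp add: VIset_def)
    have "inner (T z - T y) (z - y) \<le> norm (T z - T y) * norm (z - y)" by (rule norm_cauchy_schwarz)
    also have "\<dots> \<le> norm (z - y) * norm (z - y)"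
      using T unfolding nonexp_def by (intro mult_right_mono) auto
    finally have 2: "inner (T z - T y) (z - y) \<le> inner (z - y) (z - y)"
      by (simp add: dot_square_norm power2_eq_square)
    have "inner (z - T z) (z - y) = inner (z - y) (z - y) - inner (T z - T y) (z - y) + inner (y - T y) (z - y)"
      by (simp add: inner_diff_left algebra_simps)
    thus "0 \<le> inner (z - T z) (z - y)" using 1 2 by linarith
  qed
next
  fix y assume y: "y \<in> {y \<in> F. \<forall>z \<in> F. inner (z - T z) (z - y) \<ge> 0}"
  hence yF: "y \<in> F" by simp
  show "y \<in> VIset T F" unfolding VIset_def
  proof (safe)
    show "y \<in> F" by (rule yF)
    fix z assume z: "z \<in> F"
    define zl where "zl = (\<lambda>l::real. y + l *\<^sub>R (z - y))"
    have ev: "eventually (\<lambda>l. 0 \<le> inner (zl l - T (zl l)) (z - y)) (at_right 0)"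
      using eventually_at_right_real[of 0 1]
    proof (rule eventually_mono)
      show "(0::real) < 1" by simp
      fix l :: real assume l: "l \<in> {0<..<1}"
      have "zl l = (1 - l) *\<^sub>R y + l *\<^sub>R z" by (simp add: zl_def algebra_simps)
      hence "zl l \<in> F" using F yF z l unfolding convex_alt by auto
      hence "0 \<le> inner (zl l - T (zl l)) (zl l - y)" using y by simp
      also have "zl l - y = l *\<^sub>R (z - y)" by (simp add: zl_def)
      finally have "0 \<le> l * inner (zl l - T (zl l)) (z - y)" by simp
      thus "0 \<le> inner (zl l - T (zl l)) (z - y)" using l by (simp add: zero_le_mult_iff)
    qed
    have zl0: "(zl \<longlongrightarrow> y) (at_right 0)"
      unfolding zl_def by (auto intro!: tendsto_eq_intros)
    have "((\<lambda>l. inner (zl l - T (zl l)) (z - y)) \<longlongrightarrow> inner (y - T y) (z - y)) (at_right 0)"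
      by (intro tendsto_intros zl0 isCont_tendsto_compose[OF nonexp_isCont[OF T]])
    thus "0 \<le> inner (y - T y) (z - y)"
      by (rule tendsto_lowerbound[OF _ ev]) simp
  qed
qed

lemma VI_convex:
  assumes T: "nonexp T" and F: "convex F"
  shows "convex (VIset T F)"
  unfolding VI_minty[OF T F] convex_alt
proof (intro ballI allI impI)
  fix y1 y2 and u :: real
  assume y1: "y1 \<in> {y \<in> F. \<forall>z \<in> F. inner (z - T z) (z - y) \<ge> 0}"
    and y2: "y2 \<in> {y \<in> F. \<forall>z \<in> F. inner (z - T z) (z - y) \<ge> 0}" and u: "0 \<le> u \<and> u \<le> 1"
  show "(1 - u) *\<^sub>R y1 + u *\<^sub>R y2 \<in> {y \<in> F. \<forall>z \<in> F. inner (z - T z) (z - y) \<ge> 0}"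
  proof (safe)
    show "(1 - u) *\<^sub>R y1 + u *\<^sub>R y2 \<in> F" using F y1 y2 u unfolding convex_alt by auto
    fix z assume z: "z \<in> F"
    have a: "0 \<le> inner (z - T z) (z - y1)" "0 \<le> inner (z - T z) (z - y2)" using y1 y2 z by auto
    have "z - ((1 - u) *\<^sub>R y1 + u *\<^sub>R y2) = (1 - u) *\<^sub>R (z - y1) + u *\<^sub>R (z - y2)"
      by (simp add: algebra_simps)
    hence "inner (z - T z) (z - ((1 - u) *\<^sub>R y1 + u *\<^sub>R y2))
        = (1 - u) * inner (z - T z) (z - y1) + u * inner (z - T z) (z - y2)"
      by (simp add: inner_add_right)
    thus "0 \<le> inner (z - T z) (z - ((1 - u) *\<^sub>R y1 + u *\<^sub>R y2))"
      using a u by simp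
  qed
qed

lemma sc_coercive:
  fixes \<omega> :: "'a::real_inner \<Rightarrow> real"
  assumes sc: "strongly_convex \<mu> \<omega>" and gd: "\<And>z. GDERIV \<omega> z :> g z"
  shows "\<omega> 0 + inner (g 0) x + \<mu> / 2 * (norm x)\<^sup>2 \<le> \<omega> x"
proof -
  define h where "h = (\<lambda>x. \<omega> x - \<mu> / 2 * (norm x)\<^sup>2)"
  define gh where "gh = (\<lambda>x. g x - \<mu> *\<^sub>R x)"
  have hcv: "convex_on UNIV h" using sc unfolding strongly_convex_def h_def .
  have hgd: "GDERIV h z :> gh z" for z
    unfolding h_def gh_def using GDERIV_diff[OF gd gderiv_sq_norm[of "\<mu>/2" z]] by simp
  have "h 0 + inner (gh 0) (x - 0) \<le> h x" by (rule grad_ineq[OF hcv hgd])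
  thus ?thesis by (simp add: h_def gh_def)
qed

lemma min_exists:
  fixes \<omega> :: "'a::euclidean_space \<Rightarrow> real"
  assumes C: "closed C" "C \<noteq> {}" and cont: "continuous_on UNIV \<omega>" and \<mu>: "\<mu> > 0"
    and coer: "\<And>x. \<omega> 0 + inner g0 x + \<mu> / 2 * (norm x)\<^sup>2 \<le> \<omega> x"
  shows "\<exists>p\<in>C. \<forall>y\<in>C. \<omega> p \<le> \<omega> y"
proof -
  obtain y0 where y0: "y0 \<in> C" using C by blast
  define R where "R = 2 * (norm g0 + \<bar>\<omega> y0 - \<omega> 0\<bar>) / \<mu> + 2"
  have R1: "R \<ge> 1" using \<mu> by (simp add: R_def)
  have far: "\<omega> y0 < \<omega> x" if x: "norm x > R" for x
  proof -
    define \<rho> where "\<rho> = norm x"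
    have \<rho>1: "\<rho> > 1" using x R1 by (simp add: \<rho>_def)
    have "\<mu> * \<rho> / 2 > \<mu> * R / 2" using x \<mu> by (simp add: \<rho>_def)
    moreover have "\<mu> * R / 2 = norm g0 + \<bar>\<omega> y0 - \<omega> 0\<bar> + \<mu>" using \<mu> by (simp add: R_def field_simps)
    ultimately have a: "\<mu> * \<rho> / 2 - norm g0 > \<bar>\<omega> y0 - \<omega> 0\<bar>" using \<mu> by argo
    have "\<rho> * (\<mu> * \<rho> / 2 - norm g0) \<ge> 1 * (\<mu> * \<rho> / 2 - norm g0)"
      using \<rho>1 a by (intro mult_right_mono) auto
    hence b: "\<mu> / 2 * \<rho>\<^sup>2 - norm g0 * \<rho> > \<bar>\<omega> y0 - \<omega> 0\<bar>"
      using a by (simp add: power2_eq_square algebra_simps)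
    have "- (norm g0 * \<rho>) \<le> inner g0 x"
      using norm_cauchy_schwarz[of "-g0" x] by (simp add: \<rho>_def)
    hence "\<omega> 0 - norm g0 * \<rho> + \<mu> / 2 * \<rho>\<^sup>2 \<le> \<omega> x" using coer[of x] by (simp add: \<rho>_def)
    thus ?thesis using b by argo
  qed
  define K where "K = C \<inter> cball 0 R"
  have K: "compact K" "K \<noteq> {}"
  proof -
    show "compact K" unfolding K_def using C(1) by (simp add: closed_Int_compact)
    have "norm y0 \<le> R" using far[of y0] by argo
    thus "K \<noteq> {}" using y0 by (auto simp: K_def)
  qed
  obtain p where p: "p \<in> K" "\<And>y. y \<in> K \<Longrightarrow> \<omega> p \<le> \<omega> y"
    using continuous_attains_inf[OF K continuous_on_subset[OF cont]] by blast
  have "norm y0 \<le> R" using far[of y0] by argo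
  hence y0K: "y0 \<in> K" using y0 by (auto simp: K_def)
  show ?thesis
  proof (intro bexI ballI)
    show "p \<in> C" using p(1) by (simp add: K_def)
    fix y assume y: "y \<in> C"
    show "\<omega> p \<le> \<omega> y"
    proof (cases "norm y \<le> R")
      case True thus ?thesis using y p(2) by (simp add: K_def)
    next
      case False thus ?thesis using far[of y] p(2)[OF y0K] by simp
    qed
  qed
qed

lemma vi_of_min:
  fixes \<omega> :: "'a::real_inner \<Rightarrow> real"
  assumes C: "convex C" and p: "p \<in> C" "\<And>y. y \<in> C \<Longrightarrow> \<omega> p \<le> \<omega> y"
    and gd: "\<And>z. GDERIV \<omega> z :> g z" and y: "y \<in> C"
  shows "0 \<le> inner (g p) (y - p)"
proof -
  define \<phi> where "\<phi> = (\<lambda>l. \<omega> (p + l *\<^sub>R (y - p)))"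
  have D: "(\<phi> has_real_derivative (inner (y - p) (g p))) (at 0)"
    using line_deriv[OF gd, of p "y - p" 0] unfolding \<phi>_def by simp
  hence "((\<lambda>l. (\<phi> l - \<phi> 0) / (l - 0)) \<longlongrightarrow> inner (y - p) (g p)) (at 0)"
    using has_field_derivative_iff by blast
  hence L: "((\<lambda>l. (\<phi> l - \<phi> 0) / (l - 0)) \<longlongrightarrow> inner (y - p) (g p)) (at_right 0)"
    by (rule tendsto_mono[rotated]) (simp add: at_le)
  have ev0: "eventually (\<lambda>l. l \<in> {0<..<1}) (at_right (0::real))"
    by (rule eventually_at_right_real) simp
  have ev: "eventually (\<lambda>l. 0 \<le> (\<phi> l - \<phi> 0) / (l - 0)) (at_right (0::real))"
    using ev0
  proof (rule eventually_mono)
    fix l :: real assume l: "l \<in> {0<..<1}"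
    have "p + l *\<^sub>R (y - p) = (1 - l) *\<^sub>R p + l *\<^sub>R y" by (simp add: algebra_simps)
    hence "p + l *\<^sub>R (y - p) \<in> C" using C p(1) y l unfolding convex_alt by auto
    hence "\<phi> 0 \<le> \<phi> l" using p(2) by (simp add: \<phi>_def)
    thus "0 \<le> (\<phi> l - \<phi> 0) / (l - 0)" using l by simp
  qed
  have "0 \<le> inner (y - p) (g p)"
    by (rule tendsto_lowerbound[OF L ev]) simp
  thus ?thesis by (simp add: inner_commute)
qed

lemma vi_unique:
  assumes r: "r < 1" and S: "\<And>x y. norm (S x - S y) \<le> r * norm (x - y)"
    and z1: "inner (z1 - S z1) (z2 - z1) \<ge> 0" and z2: "inner (z2 - S z2) (z1 - z2) \<ge> 0"
  shows "z1 = (z2 :: 'a::real_inner)"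
proof -
  have "inner (z1 - S z1) (z2 - z1) + inner (z2 - S z2) (z1 - z2)
      = inner (S z1 - S z2) (z1 - z2) - inner (z1 - z2) (z1 - z2)"
    by (simp add: inner_diff_left inner_diff_right inner_commute algebra_simps)
  with z1 z2 have "inner (z1 - z2) (z1 - z2) \<le> inner (S z1 - S z2) (z1 - z2)" by linarith
  also have "\<dots> \<le> norm (S z1 - S z2) * norm (z1 - z2)" by (rule norm_cauchy_schwarz)
  also have "\<dots> \<le> r * norm (z1 - z2) * norm (z1 - z2)" using S by (intro mult_right_mono) auto
  finally have "norm (z1 - z2) * norm (z1 - z2) \<le> r * (norm (z1 - z2) * norm (z1 - z2))"
    by (simp add: dot_square_norm power2_eq_square mult.assoc)
  hence "(1 - r) * (norm (z1 - z2) * norm (z1 - z2)) \<le> 0" by (simp add: algebra_simps)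
  hence "norm (z1 - z2) * norm (z1 - z2) \<le> 0" using r by (simp add: mult_le_0_iff)
  hence "norm (z1 - z2) * norm (z1 - z2) = 0"
    using mult_nonneg_nonneg[OF norm_ge_zero norm_ge_zero, of "z1 - z2" "z1 - z2"] by argo
  thus ?thesis by simp
qed

lemma xu_lemma:
  fixes a g d :: "nat \<Rightarrow> real"
  assumes a0: "\<And>n. 0 \<le> a n"
    and rec: "\<exists>N. \<forall>n\<ge>N. a (Suc n) \<le> (1 - g n) * a n + g n * d n \<and> 0 \<le> g n \<and> g n \<le> 1"
    and gdiv: "filterlim (\<lambda>n. \<Sum>k<n. g k) at_top sequentially"
    and dlim: "\<And>e. e > 0 \<Longrightarrow> eventually (\<lambda>n. d n \<le> e) sequentially"
  shows "a \<longlonglongrightarrow> 0"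
proof (rule LIMSEQ_I)
  fix e :: real assume e: "e > 0"
  define \<epsilon> where "\<epsilon> = e / 3"
  have \<epsilon>: "\<epsilon> > 0" using e by (simp add: \<epsilon>_def)
  obtain N1 where N1: "\<And>n. n \<ge> N1 \<Longrightarrow> a (Suc n) \<le> (1 - g n) * a n + g n * d n \<and> 0 \<le> g n \<and> g n \<le> 1"
    using rec by blast
  obtain N2 where N2: "\<And>n. n \<ge> N2 \<Longrightarrow> d n \<le> \<epsilon>"
    using dlim[OF \<epsilon>] unfolding eventually_sequentially by blast
  define N where "N = max N1 N2"
  define b where "b = (\<lambda>n. max (a n - \<epsilon>) 0)"
  have b0: "0 \<le> b n" for n by (simp add: b_def)
  have step: "b (Suc n) \<le> (1 - g n) * b n" if n: "n \<ge> N" for n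
  proof -
    have r: "a (Suc n) \<le> (1 - g n) * a n + g n * d n" "0 \<le> g n" "g n \<le> 1"
      using N1[of n] n by (auto simp: N_def)
    have dn: "d n \<le> \<epsilon>" using N2[of n] n by (auto simp: N_def)
    have "a (Suc n) - \<epsilon> \<le> (1 - g n) * (a n - \<epsilon>) + g n * (d n - \<epsilon>)"
      using r(1) by (simp add: algebra_simps)
    also have "g n * (d n - \<epsilon>) \<le> 0" using r(2) dn by (simp add: mult_nonneg_nonpos)
    also have "(1 - g n) * (a n - \<epsilon>) \<le> (1 - g n) * b n"
      using r(3) by (intro mult_left_mono) (auto simp: b_def)
    finally have 1: "a (Suc n) - \<epsilon> \<le> (1 - g n) * b n" by simp
    have 2: "0 \<le> (1 - g n) * b n" using r(3) b0[of n] by simp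
    show ?thesis using 1 2 by (simp add: b_def)
  qed
  have ind: "b (N + m) \<le> b N * exp (- (\<Sum>k\<in>{N..<N + m}. g k))" for m
  proof (induction m)
    case 0 thus ?case by simp
  next
    case (Suc m)
    have gN: "0 \<le> g (N + m)" using N1[of "N + m"] by (auto simp: N_def)
    have "b (N + Suc m) \<le> (1 - g (N + m)) * b (N + m)" using step[of "N + m"] by simp
    also have "\<dots> \<le> exp (- g (N + m)) * b (N + m)"
      using exp_ge_add_one_self[of "- g (N + m)"] b0[of "N + m"] by (intro mult_right_mono) auto
    also have "\<dots> \<le> exp (- g (N + m)) * (b N * exp (- (\<Sum>k\<in>{N..<N + m}. g k)))"
      using Suc by (intro mult_left_mono) auto
    also have "\<dots> = b N * exp (- (\<Sum>k\<in>{N..<N + Suc m}. g k))"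
      by (simp add: exp_add[symmetric] algebra_simps)
    finally show ?case .
  qed
  define c where "c = ln ((b N + 1) / \<epsilon>)"
  have ec: "exp (- c) = \<epsilon> / (b N + 1)"
    using \<epsilon> b0[of N] by (simp add: c_def exp_minus field_simps)
  obtain N3 where N3: "\<And>n. n \<ge> N3 \<Longrightarrow> (\<Sum>k<N. g k) + c \<le> (\<Sum>k<n. g k)"
    using gdiv unfolding filterlim_at_top eventually_sequentially by blast
  show "\<exists>no. \<forall>n\<ge>no. norm (a n - 0) < e"
  proof (intro exI allI impI)
    fix n assume n: "n \<ge> max N N3"
    then obtain m where m: "n = N + m" by (metis le_add_diff_inverse max.boundedE)
    have s: "(\<Sum>k\<in>{N..<n}. g k) = (\<Sum>k<n. g k) - (\<Sum>k<N. g k)"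
      using sum_diff_nat_ivl[of 0 N n g] n by (simp add: atLeast0LessThan)
    have "c \<le> (\<Sum>k\<in>{N..<n}. g k)" using N3[of n] n s by simp
    hence "exp (- (\<Sum>k\<in>{N..<n}. g k)) \<le> exp (- c)" by simp
    hence "b n \<le> b N * exp (- c)"
      using ind[of m] m b0[of N] by (metis mult_left_mono order_trans)
    also have "\<dots> = b N * \<epsilon> / (b N + 1)" by (simp add: ec)
    also have "\<dots> \<le> \<epsilon>" using b0[of N] \<epsilon> by (simp add: field_simps)
    finally have "b n \<le> \<epsilon>" .
    hence "a n \<le> 2 * \<epsilon>" by (simp add: b_def)
    thus "norm (a n - 0) < e" using a0[of n] \<epsilon> by (simp add: \<epsilon>_def)
  qed
qed

lemma not_eventually_subseq:
  assumes "\<not> eventually P sequentially"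
  shows "\<exists>\<sigma>::nat\<Rightarrow>nat. strict_mono \<sigma> \<and> (\<forall>n. \<not> P (\<sigma> n))"
proof -
  have "infinite {n. \<not> P n}"
    using assms unfolding infinite_nat_iff_unbounded_le eventually_sequentially by auto
  from infinite_enumerate[OF this] show ?thesis by (simp add: mem_Collect_eq)
qed

lemma quasi_nonexp:
  fixes W :: "'a::real_inner \<Rightarrow> 'a"
  assumes W: "nonexp W" and y: "W y = y"
  shows "0 \<le> inner (x - W x) (x - y)"
proof -
  have "norm (W x - W y) \<le> norm (x - y)" using W unfolding nonexp_def by blast
  hence "norm (W x - y) \<le> norm (x - y)" using y by simp
  hence "(norm (W x - y))\<^sup>2 \<le> (norm (x - y))\<^sup>2" by (rule power_mono) simp
  moreover have e: "(x - y) - (x - W x) = W x - y" by simp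
  ultimately have "(norm ((x - y) - (x - W x)))\<^sup>2 \<le> (norm (x - y))\<^sup>2" by (simp only: e)
  hence "(norm (x - y))\<^sup>2 - 2 * inner (x - y) (x - W x) + (norm (x - W x))\<^sup>2 \<le> (norm (x - y))\<^sup>2"
    by (simp only: nd2)
  moreover have "inner (x - y) (x - W x) = inner (x - W x) (x - y)" by (rule inner_commute)
  ultimately show ?thesis using zero_le_power2[of "norm (x - W x)"] by argo
qed

lemma step_bound:
  fixes sx sx' tx tx' wx wx' X X' :: "'a::real_normed_vector"
  assumes S: "norm (sx' - sx) \<le> r * norm (X' - X)" and T: "norm (tx' - tx) \<le> norm (X' - X)"
    and W: "norm (wx' - wx) \<le> norm (X' - X)"
    and a': "0 \<le> a'" "a' \<le> 1" and b': "0 \<le> b'" "b' \<le> 1" and b: "0 \<le> b" "b \<le> 1"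
    and M: "norm sx + norm tx + norm wx \<le> M"
  shows "norm ((a' *\<^sub>R sx' + ((1 - a') * b') *\<^sub>R tx' + ((1 - a') * (1 - b')) *\<^sub>R wx')
       - (a *\<^sub>R sx + ((1 - a) * b) *\<^sub>R tx + ((1 - a) * (1 - b)) *\<^sub>R wx))
       \<le> (1 - a' * (1 - r)) * norm (X' - X) + M * (\<bar>a' - a\<bar> + \<bar>b' - b\<bar>)"
proof -
  define D where "D = norm (X' - X)"
  define v1 where "v1 = a' *\<^sub>R (sx' - sx)"
  define v2 where "v2 = (1 - a') *\<^sub>R (b' *\<^sub>R (tx' - tx) + (1 - b') *\<^sub>R (wx' - wx))"
  define v3 where "v3 = (a' - a) *\<^sub>R sx"
  define v4 where "v4 = (a - a') *\<^sub>R (b *\<^sub>R tx + (1 - b) *\<^sub>R wx)"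
  define v5 where "v5 = ((1 - a') * (b' - b)) *\<^sub>R (tx - wx)"
  have eq: "(a' *\<^sub>R sx' + ((1 - a') * b') *\<^sub>R tx' + ((1 - a') * (1 - b')) *\<^sub>R wx')
       - (a *\<^sub>R sx + ((1 - a) * b) *\<^sub>R tx + ((1 - a) * (1 - b)) *\<^sub>R wx) = v1 + v2 + v3 + v4 + v5"
    unfolding v1_def v2_def v3_def v4_def v5_def by (simp add: algebra_simps)
  have n1: "norm v1 \<le> a' * (r * D)" unfolding v1_def D_def using a' S by (simp add: mult_left_mono)
  have "norm (b' *\<^sub>R (tx' - tx) + (1 - b') *\<^sub>R (wx' - wx)) \<le> b' * D + (1 - b') * D"
  proof -
    have "norm (b' *\<^sub>R (tx' - tx) + (1 - b') *\<^sub>R (wx' - wx)) \<le> norm (b' *\<^sub>R (tx' - tx)) + norm ((1 - b') *\<^sub>R (wx' - wx))"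
      by (rule norm_triangle_ineq)
    also have "\<dots> \<le> b' * D + (1 - b') * D"
      unfolding D_def using b' T W by (intro add_mono) (simp_all add: mult_left_mono)
    finally show ?thesis .
  qed
  hence n2: "norm v2 \<le> (1 - a') * D"
  proof -
    assume h: "norm (b' *\<^sub>R (tx' - tx) + (1 - b') *\<^sub>R (wx' - wx)) \<le> b' * D + (1 - b') * D"
    have "norm v2 = (1 - a') * norm (b' *\<^sub>R (tx' - tx) + (1 - b') *\<^sub>R (wx' - wx))"
      using a' by (simp add: v2_def)
    also have "\<dots> \<le> (1 - a') * (b' * D + (1 - b') * D)" using a' h by (intro mult_left_mono) auto
    also have "\<dots> = (1 - a') * D" by (simp add: algebra_simps)
    finally show ?thesis .
  qed
  have n3: "norm v3 = \<bar>a' - a\<bar> * norm sx" by (simp add: v3_def)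
  have "norm (b *\<^sub>R tx + (1 - b) *\<^sub>R wx) \<le> norm tx + norm wx"
  proof -
    have "norm (b *\<^sub>R tx + (1 - b) *\<^sub>R wx) \<le> norm (b *\<^sub>R tx) + norm ((1 - b) *\<^sub>R wx)" by (rule norm_triangle_ineq)
    also have "\<dots> \<le> 1 * norm tx + 1 * norm wx" using b
      by (intro add_mono) (simp_all add: mult_right_mono mult_left_le_one_le)
    finally show ?thesis by simp
  qed
  hence n4: "norm v4 \<le> \<bar>a' - a\<bar> * (norm tx + norm wx)" unfolding v4_def
    by (simp add: abs_minus_commute mult_left_mono)
  have "norm v5 = (1 - a') * \<bar>b' - b\<bar> * norm (tx - wx)" using a' by (simp add: v5_def abs_mult)
  also have "\<dots> \<le> 1 * \<bar>b' - b\<bar> * (norm tx + norm wx)"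
    using a' norm_triangle_ineq4[of tx wx] by (intro mult_mono) auto
  finally have n5: "norm v5 \<le> \<bar>b' - b\<bar> * (norm tx + norm wx)" by simp
  have "norm (v1 + v2 + v3 + v4 + v5) \<le> norm v1 + norm v2 + norm v3 + norm v4 + norm v5"
  proof -
    have "norm (v1 + v2 + v3 + v4 + v5) \<le> norm (v1 + v2 + v3 + v4) + norm v5" by (rule norm_triangle_ineq)
    moreover have "norm (v1 + v2 + v3 + v4) \<le> norm (v1 + v2 + v3) + norm v4" by (rule norm_triangle_ineq)
    moreover have "norm (v1 + v2 + v3) \<le> norm (v1 + v2) + norm v3" by (rule norm_triangle_ineq)
    moreover have "norm (v1 + v2) \<le> norm v1 + norm v2" by (rule norm_triangle_ineq)
    ultimately show ?thesis by linarith
  qed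
  also have "\<dots> \<le> a' * (r * D) + (1 - a') * D + \<bar>a' - a\<bar> * norm sx + \<bar>a' - a\<bar> * (norm tx + norm wx) + \<bar>b' - b\<bar> * (norm tx + norm wx)"
    using n1 n2 n3 n4 n5 by linarith
  also have "\<dots> \<le> (1 - a' * (1 - r)) * D + M * (\<bar>a' - a\<bar> + \<bar>b' - b\<bar>)"
  proof -
    have "\<bar>a' - a\<bar> * norm sx + \<bar>a' - a\<bar> * (norm tx + norm wx) \<le> \<bar>a' - a\<bar> * M"
      using M by (simp add: distrib_left[symmetric] mult_left_mono)
    moreover have "\<bar>b' - b\<bar> * (norm tx + norm wx) \<le> \<bar>b' - b\<bar> * M"
    proof -
      have "norm tx + norm wx \<le> M" using M norm_ge_zero[of sx] by linarith
      thus ?thesis by (intro mult_left_mono) auto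
    qed
    moreover have "a' * (r * D) + (1 - a') * D = (1 - a' * (1 - r)) * D" by (simp add: algebra_simps)
    ultimately show ?thesis by (simp add: algebra_simps)
  qed
  finally show ?thesis unfolding eq D_def .
qed

lemma iter_ident:
  fixes X s t w x' :: "'a::real_vector"
  assumes "x' = a *\<^sub>R s + ((1 - a) * b) *\<^sub>R t + ((1 - a) * (1 - b)) *\<^sub>R w"
  shows "((1 - a) * (1 - b)) *\<^sub>R (X - w) = (X - x') - a *\<^sub>R (X - s) - ((1 - a) * b) *\<^sub>R (X - t)"
    and "((1 - a) * b) *\<^sub>R (X - t) = (X - x') - a *\<^sub>R (X - s) - ((1 - a) * (1 - b)) *\<^sub>R (X - w)"
  using assms by (simp_all add: algebra_simps)

locale conv =
  fixes S T W :: "'a::euclidean_space \<Rightarrow> 'a" and \<alpha> \<beta> :: "nat \<Rightarrow> real" and x :: "nat \<Rightarrow> 'a"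
    and r :: real and p :: 'a
  assumes r: "0 \<le> r" "r < 1" and Sc: "\<And>a b. norm (S a - S b) \<le> r * norm (a - b)"
    and Tn: "nonexp T" and Wn: "nonexp W"
    and \<alpha>_range: "\<And>k. 0 < \<alpha> k \<and> \<alpha> k < 1"
    and \<beta>_range: "\<And>k. 0 < \<beta> k \<and> \<beta> k < 1"
    and iter: "\<And>k. x (Suc k) = \<alpha> k *\<^sub>R S (x k) + ((1 - \<alpha> k) * \<beta> k) *\<^sub>R T (x k)
                              + ((1 - \<alpha> k) * (1 - \<beta> k)) *\<^sub>R W (x k)"
    and ratio_lim: "filterlim (\<lambda>k. \<beta> k / \<alpha> k) at_top sequentially"
    and \<alpha>_div: "filterlim (\<lambda>n. \<Sum>k<n. \<alpha> k) at_top sequentially"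
    and K_cond: "\<exists>K>0. limsup (\<lambda>k. ereal (1 / \<alpha> (Suc k) * \<bar>1 / \<beta> (Suc k) - 1 / \<beta> k\<bar>)) \<le> ereal K"
    and diff_cond: "limsup (\<lambda>k. ereal ((\<bar>\<beta> (Suc k) - \<beta> k\<bar> + \<bar>\<alpha> (Suc k) - \<alpha> k\<bar>)
                                     / (\<alpha> (Suc k) * \<beta> (Suc k)))) = 0"
    and x_bounded: "bounded (range x)"
    and A1: "\<forall>\<rho>>0. \<exists>\<theta>>0. \<forall>y. norm y \<le> \<rho> \<longrightarrow> infdist y (fixpts W) \<le> \<theta> * norm (y - W y)"
    and A2: "limsup (\<lambda>k. ereal ((\<beta> k)\<^sup>2 / \<alpha> k)) = 0"
    and p\<Omega>: "p \<in> VIset T (fixpts W)"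
    and pvi: "\<And>y. y \<in> VIset T (fixpts W) \<Longrightarrow> inner (p - S p) (y - p) \<ge> 0"
begin

lemma ev_K: "\<exists>K>0. eventually (\<lambda>k. 1 / \<alpha> (Suc k) * \<bar>1 / \<beta> (Suc k) - 1 / \<beta> k\<bar> \<le> K) sequentially"
proof -
  obtain K where K: "K > 0" "limsup (\<lambda>k. ereal (1 / \<alpha> (Suc k) * \<bar>1 / \<beta> (Suc k) - 1 / \<beta> k\<bar>)) \<le> ereal K"
    using K_cond by blast
  hence "limsup (\<lambda>k. ereal (1 / \<alpha> (Suc k) * \<bar>1 / \<beta> (Suc k) - 1 / \<beta> k\<bar>)) < ereal (K + 1)"
    using order.strict_trans1[OF K(2), of "ereal (K + 1)"] by simp
  hence "eventually (\<lambda>k. ereal (1 / \<alpha> (Suc k) * \<bar>1 / \<beta> (Suc k) - 1 / \<beta> k\<bar>) < ereal (K + 1)) sequentially"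
    by (rule Limsup_lessD)
  hence "eventually (\<lambda>k. 1 / \<alpha> (Suc k) * \<bar>1 / \<beta> (Suc k) - 1 / \<beta> k\<bar> \<le> K + 1) sequentially"
    by eventually_elim simp
  thus ?thesis using K(1) by (intro exI[of _ "K + 1"]) auto
qed

lemma ev_diff:
  assumes e: "e > 0"
  shows "eventually (\<lambda>k. (\<bar>\<beta> (Suc k) - \<beta> k\<bar> + \<bar>\<alpha> (Suc k) - \<alpha> k\<bar>) / (\<alpha> (Suc k) * \<beta> (Suc k)) < e) sequentially"
proof -
  have "limsup (\<lambda>k. ereal ((\<bar>\<beta> (Suc k) - \<beta> k\<bar> + \<bar>\<alpha> (Suc k) - \<alpha> k\<bar>) / (\<alpha> (Suc k) * \<beta> (Suc k)))) < ereal e"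
    using diff_cond e by simp
  hence "eventually (\<lambda>k. ereal ((\<bar>\<beta> (Suc k) - \<beta> k\<bar> + \<bar>\<alpha> (Suc k) - \<alpha> k\<bar>) / (\<alpha> (Suc k) * \<beta> (Suc k))) < ereal e) sequentially"
    by (rule Limsup_lessD)
  thus ?thesis by eventually_elim simp
qed

lemma ev_A2:
  assumes e: "e > 0"
  shows "eventually (\<lambda>k. (\<beta> k)\<^sup>2 / \<alpha> k < e) sequentially"
proof -
  have "limsup (\<lambda>k. ereal ((\<beta> k)\<^sup>2 / \<alpha> k)) < ereal e" using A2 e by simp
  hence "eventually (\<lambda>k. ereal ((\<beta> k)\<^sup>2 / \<alpha> k) < ereal e) sequentially" by (rule Limsup_lessD)
  thus ?thesis by eventually_elim simp
qed

lemma \<beta>_small: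
  assumes e: "e > 0"
  shows "eventually (\<lambda>k. \<beta> k < e) sequentially"
proof -
  have ev: "eventually (\<lambda>k. (\<beta> k)\<^sup>2 / \<alpha> k < e\<^sup>2) sequentially" using ev_A2 e by simp
  show ?thesis using ev
  proof eventually_elim
  case (elim k)
  have a: "0 < \<alpha> k" "\<alpha> k < 1" and b: "0 < \<beta> k" using \<alpha>_range \<beta>_range by auto
  have "(\<beta> k)\<^sup>2 * \<alpha> k \<le> (\<beta> k)\<^sup>2 * 1" using a by (intro mult_left_mono) auto
  hence "(\<beta> k)\<^sup>2 \<le> (\<beta> k)\<^sup>2 / \<alpha> k" using a by (simp add: le_divide_eq)
  hence "(\<beta> k)\<^sup>2 < e\<^sup>2" using elim by simp
  thus ?case using e b by (simp add: power_less_imp_less_base)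
qed
qed

lemma \<alpha>_le:
  assumes c: "c > 0"
  shows "eventually (\<lambda>k. \<alpha> k \<le> c * \<beta> k) sequentially"
proof -
  have "eventually (\<lambda>k. 1 / c \<le> \<beta> k / \<alpha> k) sequentially"
    using ratio_lim unfolding filterlim_at_top by blast
  thus ?thesis
  proof eventually_elim
    case (elim k)
    have a: "0 < \<alpha> k" using \<alpha>_range by auto
    from elim have "\<alpha> k / c \<le> \<beta> k" using a c by (simp add: field_simps)
    thus ?case using c by (simp add: field_simps)
  qed
qed

lemma bounds: "\<exists>B>0. \<forall>n. norm (x n) \<le> B"
proof -
  obtain B where "\<forall>y\<in>range x. norm y \<le> B" using x_bounded unfolding bounded_iff by blast
  hence "\<forall>n. norm (x n) \<le> max B 1" by (meson le_max_iff_disj rangeI)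
  thus ?thesis by (intro exI[of _ "max B 1"]) auto
qed

definition B where "B = (SOME B. B > 0 \<and> (\<forall>n. norm (x n) \<le> B))"

lemma Bnd: "B > 0" "norm (x n) \<le> B"
  using someI_ex[OF bounds] unfolding B_def by auto

definition M0 where "M0 = norm (S 0) + norm (T 0) + norm (W 0) + 3 * B"

lemma M0: "norm (S (x n)) + norm (T (x n)) + norm (W (x n)) \<le> M0" "0 \<le> M0"
proof -
  have "norm (S (x n)) \<le> norm (S 0) + B"
  proof -
    have "norm (S (x n) - S 0) \<le> r * norm (x n - 0)" by (rule Sc)
    also have "\<dots> \<le> 1 * B" using r Bnd(2)[of n] by (intro mult_mono) auto
    finally show ?thesis using norm_triangle_ineq2[of "S (x n)" "S 0"] by simp
  qed
  moreover have "norm (T (x n)) \<le> norm (T 0) + B"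
  proof -
    have "norm (T (x n) - T 0) \<le> norm (x n - 0)" using Tn unfolding nonexp_def by blast
    thus ?thesis using norm_triangle_ineq2[of "T (x n)" "T 0"] Bnd(2)[of n] by simp
  qed
  moreover have "norm (W (x n)) \<le> norm (W 0) + B"
  proof -
    have "norm (W (x n) - W 0) \<le> norm (x n - 0)" using Wn unfolding nonexp_def by blast
    thus ?thesis using norm_triangle_ineq2[of "W (x n)" "W 0"] Bnd(2)[of n] by simp
  qed
  ultimately show "norm (S (x n)) + norm (T (x n)) + norm (W (x n)) \<le> M0"
    unfolding M0_def by linarith
  show "0 \<le> M0" unfolding M0_def using Bnd by simp
qed

definition E where "E n = norm (x (Suc n) - x n)"

lemma E_rec: "E (Suc n) \<le> (1 - \<alpha> (Suc n) * (1 - r)) * E n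
    + M0 * (\<bar>\<alpha> (Suc n) - \<alpha> n\<bar> + \<bar>\<beta> (Suc n) - \<beta> n\<bar>)"
proof -
  have tn: "norm (T (x (Suc n)) - T (x n)) \<le> norm (x (Suc n) - x n)" using Tn unfolding nonexp_def by blast
  have wn: "norm (W (x (Suc n)) - W (x n)) \<le> norm (x (Suc n) - x n)" using Wn unfolding nonexp_def by blast
  show ?thesis
    unfolding E_def iter[of "Suc n"] iter[of n]
    using step_bound[OF Sc tn wn _ _ _ _ _ _ M0(1)[of n], of "\<alpha> (Suc n)" "\<beta> (Suc n)" "\<beta> n" "\<alpha> n"]
      \<alpha>_range[of "Suc n"] \<beta>_range[of "Suc n"] \<beta>_range[of n]
    unfolding iter[of n, symmetric] by simp
qed

end

lemma rec_real:
  fixes a' b b' r K En En' M D :: real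
  assumes a': "0 < a'" "a' < 1" and b: "0 < b" and b': "0 < b'" and r: "0 \<le> r" "r < 1" and K: "K > 0"
    and q: "1 / a' * \<bar>1 / b' - 1 / b\<bar> \<le> K" and bs: "b < (1 - r) / (2 * K)"
    and En': "En' \<le> (1 - a' * (1 - r)) * En + M * D" and En: "0 \<le> En" and M: "0 \<le> M" and D: "0 \<le> D"
  shows "En' / b' \<le> (1 - a' * (1 - r) / 2) * (En / b) + (a' * (1 - r) / 2) * ((2 * M / (1 - r)) * (D / (a' * b')))"
proof -
  have qa: "\<bar>1 / b' - 1 / b\<bar> \<le> K * a'" using q a' by (simp add: field_simps)
  have ratio: "b / b' = 1 + b * (1 / b' - 1 / b)" using b b' by (simp add: field_simps)
  have "b * (1 / b' - 1 / b) \<le> b * \<bar>1 / b' - 1 / b\<bar>" using b by (intro mult_left_mono) auto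
  also have "\<dots> \<le> b * (K * a')" using b qa by (intro mult_left_mono) auto
  also have "\<dots> \<le> (1 - r) / (2 * K) * (K * a')" using bs K a' by (intro mult_right_mono) auto
  also have "\<dots> = a' * (1 - r) / 2" using K by (simp add: field_simps)
  finally have bb: "b / b' \<le> 1 + a' * (1 - r) / 2" using ratio by simp
  define c where "c = 1 - a' * (1 - r)"
  have "a' * (1 - r) \<le> 1 * 1" using a' r by (intro mult_mono) auto
  hence c0: "0 \<le> c" by (simp add: c_def)
  have "c * (b / b') \<le> c * (1 + a' * (1 - r) / 2)" using c0 bb by (intro mult_left_mono)
  also have "\<dots> = 1 - a' * (1 - r) / 2 - (a' * (1 - r))\<^sup>2 / 2"
  proof -
    have gen: "\<And>u::real. (1 - u) * (1 + u / 2) = 1 - u / 2 - u\<^sup>2 / 2" by (simp add: power2_eq_square field_simps)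
    show ?thesis unfolding c_def by (rule gen)
  qed
  also have "\<dots> \<le> 1 - a' * (1 - r) / 2" by simp
  finally have cb: "c * (b / b') \<le> 1 - a' * (1 - r) / 2" .
  have "En' / b' \<le> (c * En + M * D) / b'" using En' b' by (simp add: c_def divide_right_mono)
  also have "\<dots> = (c * (b / b')) * (En / b) + M * D / b'" using b b' by (simp add: field_simps)
  also have "(c * (b / b')) * (En / b) \<le> (1 - a' * (1 - r) / 2) * (En / b)"
    using cb En b by (intro mult_right_mono) auto
  also have "M * D / b' = (a' * (1 - r) / 2) * ((2 * M / (1 - r)) * (D / (a' * b')))"
    using a' b' r by (simp add: field_simps)
  finally show ?thesis by simp
qed

context conv begin

lemma g_div: "filterlim (\<lambda>n. \<Sum>k<n. \<alpha> (Suc k) * (1 - r) / 2) at_top sequentially"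
  unfolding filterlim_at_top
proof
  fix Z :: real
  have c: "(1 - r) / 2 > 0" using r by simp
  have "eventually (\<lambda>n. Z / ((1 - r) / 2) + \<alpha> 0 \<le> (\<Sum>k<n. \<alpha> k)) sequentially"
    using \<alpha>_div unfolding filterlim_at_top by blast
  thus "eventually (\<lambda>n. Z \<le> (\<Sum>k<n. \<alpha> (Suc k) * (1 - r) / 2)) sequentially"
  proof eventually_elim
    case (elim n)
    have "(\<Sum>k<Suc n. \<alpha> k) = \<alpha> 0 + (\<Sum>k<n. \<alpha> (Suc k))" by (rule sum.lessThan_Suc_shift)
    moreover have "(\<Sum>k<n. \<alpha> k) \<le> (\<Sum>k<Suc n. \<alpha> k)" using \<alpha>_range[of n] by simp
    ultimately have "Z / ((1 - r) / 2) \<le> (\<Sum>k<n. \<alpha> (Suc k))" using elim by linarith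
    hence "Z \<le> (\<Sum>k<n. \<alpha> (Suc k)) * ((1 - r) / 2)" using c by (simp add: divide_le_eq)
    also have "\<dots> = (\<Sum>k<n. \<alpha> (Suc k) * (1 - r) / 2)" by (simp add: sum_distrib_right)
    finally show ?case .
  qed
qed

lemma E_over_\<beta>: "(\<lambda>n. E n / \<beta> n) \<longlonglongrightarrow> 0"
proof (rule xu_lemma[where g = "\<lambda>n. \<alpha> (Suc n) * (1 - r) / 2"
    and d = "\<lambda>n. (2 * M0 / (1 - r)) * ((\<bar>\<beta> (Suc n) - \<beta> n\<bar> + \<bar>\<alpha> (Suc n) - \<alpha> n\<bar>) / (\<alpha> (Suc n) * \<beta> (Suc n)))"])
  fix n show "0 \<le> E n / \<beta> n" using \<beta>_range[of n] by (simp add: E_def)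
next
  show "filterlim (\<lambda>n. \<Sum>k<n. \<alpha> (Suc k) * (1 - r) / 2) at_top sequentially" by (rule g_div)
next
  fix e :: real assume e: "e > 0"
  define e' where "e' = e * (1 - r) / (2 * M0 + 1)"
  have e': "e' > 0" using e r M0(2) by (simp add: e'_def)
  show "eventually (\<lambda>n. (2 * M0 / (1 - r)) * ((\<bar>\<beta> (Suc n) - \<beta> n\<bar> + \<bar>\<alpha> (Suc n) - \<alpha> n\<bar>) / (\<alpha> (Suc n) * \<beta> (Suc n))) \<le> e) sequentially"
    using ev_diff[OF e']
  proof eventually_elim
    case (elim n)
    define q where "q = (\<bar>\<beta> (Suc n) - \<beta> n\<bar> + \<bar>\<alpha> (Suc n) - \<alpha> n\<bar>) / (\<alpha> (Suc n) * \<beta> (Suc n))"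
    have q: "q < e'" using elim by (simp add: q_def)
    have cpos: "0 \<le> 2 * M0 / (1 - r)" using r M0(2) by simp
    have "(2 * M0 / (1 - r)) * q \<le> (2 * M0 / (1 - r)) * e'" using q cpos by (intro mult_left_mono) auto
    also have "\<dots> = e * (2 * M0 / (2 * M0 + 1))" using r M0(2) by (simp add: e'_def divide_simps)
    also have "\<dots> \<le> e * 1" using e M0(2) by (intro mult_left_mono) auto
    finally show ?case by (simp add: q_def)
  qed
next
  obtain K where K: "K > 0" "eventually (\<lambda>k. 1 / \<alpha> (Suc k) * \<bar>1 / \<beta> (Suc k) - 1 / \<beta> k\<bar> \<le> K) sequentially"
    using ev_K by blast
  have "(1 - r) / (2 * K) > 0" using K r by simp
  from K(2) \<beta>_small[OF this]
  have "eventually (\<lambda>n. E (Suc n) / \<beta> (Suc n) \<le> (1 - \<alpha> (Suc n) * (1 - r) / 2) * (E n / \<beta> n) +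
       \<alpha> (Suc n) * (1 - r) / 2 * ((2 * M0 / (1 - r)) * ((\<bar>\<beta> (Suc n) - \<beta> n\<bar> + \<bar>\<alpha> (Suc n) - \<alpha> n\<bar>) / (\<alpha> (Suc n) * \<beta> (Suc n))))
       \<and> 0 \<le> \<alpha> (Suc n) * (1 - r) / 2 \<and> \<alpha> (Suc n) * (1 - r) / 2 \<le> 1) sequentially"
  proof eventually_elim
    case (elim n)
    have a: "0 < \<alpha> (Suc n)" "\<alpha> (Suc n) < 1" using \<alpha>_range by auto
    have D: "0 \<le> \<bar>\<beta> (Suc n) - \<beta> n\<bar> + \<bar>\<alpha> (Suc n) - \<alpha> n\<bar>" by simp
    have ER: "E (Suc n) \<le> (1 - \<alpha> (Suc n) * (1 - r)) * E n + M0 * (\<bar>\<beta> (Suc n) - \<beta> n\<bar> + \<bar>\<alpha> (Suc n) - \<alpha> n\<bar>)"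
      using E_rec[of n] by (simp add: add.commute)
    have 1: "E (Suc n) / \<beta> (Suc n) \<le> (1 - \<alpha> (Suc n) * (1 - r) / 2) * (E n / \<beta> n) +
       \<alpha> (Suc n) * (1 - r) / 2 * ((2 * M0 / (1 - r)) * ((\<bar>\<beta> (Suc n) - \<beta> n\<bar> + \<bar>\<alpha> (Suc n) - \<alpha> n\<bar>) / (\<alpha> (Suc n) * \<beta> (Suc n))))"
      by (rule rec_real[OF a _ _ r K(1) elim(1) elim(2) ER _ M0(2) D])
         (use \<beta>_range in \<open>auto simp: E_def\<close>)
    have "\<alpha> (Suc n) * (1 - r) \<le> 1 * 1" using a r by (intro mult_mono) auto
    thus ?case using 1 a r by simp
  qed
  thus "\<exists>N. \<forall>n\<ge>N. E (Suc n) / \<beta> (Suc n) \<le> (1 - \<alpha> (Suc n) * (1 - r) / 2) * (E n / \<beta> n) +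
       \<alpha> (Suc n) * (1 - r) / 2 * ((2 * M0 / (1 - r)) * ((\<bar>\<beta> (Suc n) - \<beta> n\<bar> + \<bar>\<alpha> (Suc n) - \<alpha> n\<bar>) / (\<alpha> (Suc n) * \<beta> (Suc n))))
       \<and> 0 \<le> \<alpha> (Suc n) * (1 - r) / 2 \<and> \<alpha> (Suc n) * (1 - r) / 2 \<le> 1"
    unfolding eventually_sequentially by blast
qed

end

context conv begin

lemma E_small:
  assumes c: "c > 0"
  shows "eventually (\<lambda>n. E n \<le> c * \<beta> n) sequentially"
proof -
  have "eventually (\<lambda>n. dist (E n / \<beta> n) 0 < c) sequentially"
    using E_over_\<beta> c by (rule tendstoD)
  thus ?thesis
  proof eventually_elim
    case (elim n)
    have b: "\<beta> n > 0" using \<beta>_range by auto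
    have "E n \<ge> 0" by (simp add: E_def)
    hence "E n / \<beta> n < c" using elim b by (simp add: dist_real_def)
    thus ?case using b by (simp add: divide_less_eq)
  qed
qed

lemma W_bound: "\<exists>Cw\<ge>0. eventually (\<lambda>n. norm (x n - W (x n)) \<le> Cw * \<beta> n) sequentially"
proof -
  define Cw where "Cw = 4 * (1 + 2 * (B + M0))"
  have Cw: "Cw \<ge> 0" using Bnd M0(2) by (simp add: Cw_def)
  have ev: "eventually (\<lambda>n. E n \<le> 1 * \<beta> n \<and> \<alpha> n \<le> 1 * \<beta> n \<and> \<beta> n < 1 / 2) sequentially"
    using E_small[of 1] \<alpha>_le[of 1] \<beta>_small[of "1/2"] by (auto intro: eventually_conj)
  have "eventually (\<lambda>n. norm (x n - W (x n)) \<le> Cw * \<beta> n) sequentially"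
    using ev
  proof eventually_elim
    case (elim n)
    define a where "a = \<alpha> n"
    define b where "b = \<beta> n"
    have a: "0 < a" "a < 1" and b: "0 < b" "b < 1" using \<alpha>_range \<beta>_range by (auto simp: a_def b_def)
    have eqv: "((1 - a) * (1 - b)) *\<^sub>R (x n - W (x n)) = (x n - x (Suc n)) - a *\<^sub>R (x n - S (x n)) - ((1 - a) * b) *\<^sub>R (x n - T (x n))"
      unfolding a_def b_def by (rule iter_ident(1)[OF iter])
    have nS: "norm (x n - S (x n)) \<le> B + M0"
      using norm_triangle_ineq4[of "x n" "S (x n)"] Bnd(2)[of n] M0(1)[of n]
        norm_ge_zero[of "T (x n)"] norm_ge_zero[of "W (x n)"] by linarith
    have nT: "norm (x n - T (x n)) \<le> B + M0"
      using norm_triangle_ineq4[of "x n" "T (x n)"] Bnd(2)[of n] M0(1)[of n]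
        norm_ge_zero[of "S (x n)"] norm_ge_zero[of "W (x n)"] by linarith
    have "(1 - a) * (1 - b) * norm (x n - W (x n)) = norm ((x n - x (Suc n)) - a *\<^sub>R (x n - S (x n)) - ((1 - a) * b) *\<^sub>R (x n - T (x n)))"
      using eqv[symmetric] a b by simp
    also have "\<dots> \<le> norm (x n - x (Suc n)) + norm (a *\<^sub>R (x n - S (x n))) + norm (((1 - a) * b) *\<^sub>R (x n - T (x n)))"
    proof -
      have "norm ((x n - x (Suc n)) - a *\<^sub>R (x n - S (x n)) - ((1 - a) * b) *\<^sub>R (x n - T (x n)))
          \<le> norm ((x n - x (Suc n)) - a *\<^sub>R (x n - S (x n))) + norm (((1 - a) * b) *\<^sub>R (x n - T (x n)))"
        by (rule norm_triangle_ineq4)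
      moreover have "norm ((x n - x (Suc n)) - a *\<^sub>R (x n - S (x n))) \<le> norm (x n - x (Suc n)) + norm (a *\<^sub>R (x n - S (x n)))"
        by (rule norm_triangle_ineq4)
      ultimately show ?thesis by linarith
    qed
    also have "\<dots> \<le> E n + a * (B + M0) + b * (B + M0)"
    proof -
      have "norm (x n - x (Suc n)) = E n" by (simp add: E_def norm_minus_commute)
      moreover have "norm (a *\<^sub>R (x n - S (x n))) \<le> a * (B + M0)" using a nS by (simp add: mult_left_mono)
      moreover have "norm (((1 - a) * b) *\<^sub>R (x n - T (x n))) \<le> ((1 - a) * b) * (B + M0)"
        using a b nT by (simp add: mult_left_mono)
      moreover have "((1 - a) * b) * (B + M0) \<le> 1 * b * (B + M0)"
        using a b Bnd M0(2) by (intro mult_right_mono) auto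
      ultimately show ?thesis by linarith
    qed
    also have "\<dots> \<le> b + b * (B + M0) + b * (B + M0)"
    proof -
      have "E n \<le> b" using elim by (simp add: b_def)
      moreover have "a * (B + M0) \<le> b * (B + M0)" using elim Bnd M0(2) by (intro mult_right_mono) (auto simp: a_def b_def)
      ultimately show ?thesis by linarith
    qed
    finally have 1: "(1 - a) * (1 - b) * norm (x n - W (x n)) \<le> b * (1 + 2 * (B + M0))"
      by (simp add: algebra_simps)
    have "1 / 4 \<le> (1 - a) * (1 - b)"
    proof -
      have "a < 1/2" "b < 1/2" using elim by (auto simp: a_def b_def)
      hence "1/2 * (1/2) \<le> (1 - a) * (1 - b)" by (intro mult_mono) auto
      thus ?thesis by simp
    qed
    hence "1 / 4 * norm (x n - W (x n)) \<le> (1 - a) * (1 - b) * norm (x n - W (x n))"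
      by (intro mult_right_mono) auto
    with 1 have "norm (x n - W (x n)) \<le> 4 * (b * (1 + 2 * (B + M0)))" by simp
    thus ?case by (simp add: Cw_def b_def algebra_simps)
  qed
  thus ?thesis using Cw by blast
qed

lemma W_to0: "(\<lambda>n. norm (x n - W (x n))) \<longlonglongrightarrow> 0"
proof (rule LIMSEQ_I)
  fix e :: real assume e: "e > 0"
  obtain Cw where Cw: "Cw \<ge> 0" "eventually (\<lambda>n. norm (x n - W (x n)) \<le> Cw * \<beta> n) sequentially"
    using W_bound by blast
  have "e / (Cw + 1) > 0" using e Cw by simp
  from Cw(2) \<beta>_small[OF this]
  have "eventually (\<lambda>n. norm (norm (x n - W (x n)) - 0) < e) sequentially"
  proof eventually_elim
    case (elim n)
    have "Cw * \<beta> n \<le> (Cw + 1) * \<beta> n" using \<beta>_range[of n] by simp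
    also have "\<dots> < (Cw + 1) * (e / (Cw + 1))" using elim(2) Cw by (intro mult_strict_left_mono) auto
    also have "\<dots> = e" using Cw by simp
    finally show ?case using elim(1) by simp
  qed
  thus "\<exists>no. \<forall>n\<ge>no. norm (norm (x n - W (x n)) - 0) < e" unfolding eventually_sequentially .
qed

lemma dist_bound: "\<exists>Cd\<ge>0. eventually (\<lambda>n. infdist (x n) (fixpts W) \<le> Cd * \<beta> n) sequentially"
proof -
  obtain \<theta> where \<theta>: "\<theta> > 0" "\<And>y. norm y \<le> B \<Longrightarrow> infdist y (fixpts W) \<le> \<theta> * norm (y - W y)"
    using A1 Bnd(1) by blast
  obtain Cw where Cw: "Cw \<ge> 0" "eventually (\<lambda>n. norm (x n - W (x n)) \<le> Cw * \<beta> n) sequentially"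
    using W_bound by blast
  have "eventually (\<lambda>n. infdist (x n) (fixpts W) \<le> (\<theta> * Cw) * \<beta> n) sequentially"
    using Cw(2)
  proof eventually_elim
    case (elim n)
    have "infdist (x n) (fixpts W) \<le> \<theta> * norm (x n - W (x n))" by (rule \<theta>(2)[OF Bnd(2)])
    also have "\<dots> \<le> \<theta> * (Cw * \<beta> n)" using elim \<theta> by (intro mult_left_mono) auto
    finally show ?case by (simp add: mult.assoc)
  qed
  thus ?thesis using \<theta> Cw by (intro exI[of _ "\<theta> * Cw"]) auto
qed

end

context conv begin

lemma psi_ev:
  assumes y: "y \<in> fixpts W" and e: "e > 0"
  shows "eventually (\<lambda>n. inner (x n - T (x n)) (x n - y) \<le> e) sequentially"
proof -
  define Dy where "Dy = B + norm y"
  have Dy: "Dy > 0" using Bnd(1) by (simp add: Dy_def add_pos_nonneg)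
  define c where "c = e / (2 * Dy * (1 + B + M0))"
  have c: "c > 0" using e Dy Bnd(1) M0(2) by (simp add: c_def add_pos_nonneg)
  have ev: "eventually (\<lambda>n. E n \<le> c * \<beta> n \<and> \<alpha> n \<le> c * \<beta> n \<and> \<alpha> n < 1 / 2) sequentially"
  proof -
    have "eventually (\<lambda>n. \<alpha> n \<le> 1 * \<beta> n \<and> \<beta> n < 1 / 2) sequentially"
      using \<alpha>_le[of 1] \<beta>_small[of "1/2"] by (auto intro: eventually_conj)
    hence "eventually (\<lambda>n. \<alpha> n < 1 / 2) sequentially" by eventually_elim auto
    thus ?thesis using E_small[OF c] \<alpha>_le[OF c] by (auto intro: eventually_conj)
  qed
  show ?thesis using ev
  proof eventually_elim
    case (elim n)
    define a where "a = \<alpha> n"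
    define b where "b = \<beta> n"
    have a: "0 < a" "a < 1 / 2" and b: "0 < b" "b < 1" using \<alpha>_range \<beta>_range elim by (auto simp: a_def b_def)
    have Wy: "W y = y" using y by (simp add: fixpts_def)
    have eqv: "((1 - a) * b) *\<^sub>R (x n - T (x n)) = (x n - x (Suc n)) - a *\<^sub>R (x n - S (x n)) - ((1 - a) * (1 - b)) *\<^sub>R (x n - W (x n))"
      unfolding a_def b_def by (rule iter_ident(2)[OF iter])
    have "(1 - a) * b * inner (x n - T (x n)) (x n - y)
        = inner (x n - x (Suc n)) (x n - y) - a * inner (x n - S (x n)) (x n - y) - ((1 - a) * (1 - b)) * inner (x n - W (x n)) (x n - y)"
      using arg_cong[OF eqv, of "\<lambda>v. inner v (x n - y)"] by (simp add: inner_diff_left)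
    also have "\<dots> \<le> inner (x n - x (Suc n)) (x n - y) - a * inner (x n - S (x n)) (x n - y)"
    proof -
      have "0 \<le> inner (x n - W (x n)) (x n - y)" by (rule quasi_nonexp[OF Wn Wy])
      moreover have "0 \<le> (1 - a) * (1 - b)" using a b by simp
      ultimately show ?thesis by (simp add: mult_nonneg_nonneg)
    qed
    also have "\<dots> \<le> E n * Dy + a * ((B + M0) * Dy)"
    proof -
      have ny: "norm (x n - y) \<le> Dy" using norm_triangle_ineq4[of "x n" y] Bnd(2)[of n] by (simp add: Dy_def)
      have nS: "norm (x n - S (x n)) \<le> B + M0"
        using norm_triangle_ineq4[of "x n" "S (x n)"] Bnd(2)[of n] M0(1)[of n]
          norm_ge_zero[of "T (x n)"] norm_ge_zero[of "W (x n)"] by linarith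
      have "inner (x n - x (Suc n)) (x n - y) \<le> norm (x n - x (Suc n)) * norm (x n - y)" by (rule norm_cauchy_schwarz)
      also have "\<dots> \<le> E n * Dy" using ny by (simp add: E_def norm_minus_commute mult_left_mono)
      finally have 1: "inner (x n - x (Suc n)) (x n - y) \<le> E n * Dy" .
      have "- inner (x n - S (x n)) (x n - y) \<le> norm (x n - S (x n)) * norm (x n - y)"
        using norm_cauchy_schwarz[of "- (x n - S (x n))" "x n - y"] by (simp only: inner_minus_left norm_minus_cancel)
      also have "\<dots> \<le> (B + M0) * Dy" using nS ny Bnd(1) M0(2) by (intro mult_mono) auto
      finally have "a * (- inner (x n - S (x n)) (x n - y)) \<le> a * ((B + M0) * Dy)" using a by (intro mult_left_mono) auto
      thus ?thesis using 1 by simp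
    qed
    also have "\<dots> \<le> c * b * Dy + c * b * ((B + M0) * Dy)"
    proof -
      have "E n * Dy \<le> (c * b) * Dy" using elim Dy by (intro mult_right_mono) (auto simp: b_def)
      moreover have "a * ((B + M0) * Dy) \<le> (c * b) * ((B + M0) * Dy)"
        using elim Dy Bnd(1) M0(2) by (intro mult_right_mono) (auto simp: a_def b_def)
      ultimately show ?thesis by simp
    qed
    also have "\<dots> = b * (c * Dy * (1 + B + M0))" by (simp add: algebra_simps)
    also have "\<dots> = b * (e / 2)" using Dy Bnd(1) M0(2) by (simp add: c_def divide_simps)
    finally have 1: "(1 - a) * b * inner (x n - T (x n)) (x n - y) \<le> b * (e / 2)" .
    show ?case
    proof (rule ccontr)
      assume "\<not> inner (x n - T (x n)) (x n - y) \<le> e"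
      hence g: "e < inner (x n - T (x n)) (x n - y)" by simp
      have "b * (e / 2) < (1 - a) * b * e" using a b e by (simp add: field_simps)
      also have "\<dots> \<le> (1 - a) * b * inner (x n - T (x n)) (x n - y)" using g a b by (intro mult_left_mono) auto
      finally show False using 1 by simp
    qed
  qed
qed

lemma cluster:
  assumes \<sigma>: "strict_mono \<sigma>" and q: "(x \<circ> \<sigma>) \<longlonglongrightarrow> q"
  shows "q \<in> VIset T (fixpts W)"
proof -
  have l1: "(\<lambda>n. norm (x (\<sigma> n) - W (x (\<sigma> n)))) \<longlonglongrightarrow> norm (q - W q)"
    using q by (intro tendsto_intros isCont_tendsto_compose[OF nonexp_isCont[OF Wn]]) (simp_all add: o_def)
  have l2: "(\<lambda>n. norm (x (\<sigma> n) - W (x (\<sigma> n)))) \<longlonglongrightarrow> 0"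
    using LIMSEQ_subseq_LIMSEQ[OF W_to0 \<sigma>] by (simp add: o_def)
  have "norm (q - W q) = 0" using LIMSEQ_unique[OF l1 l2] .
  hence qF: "q \<in> fixpts W" by (simp add: fixpts_def)
  have "0 \<le> inner (q - T q) (y - q)" if y: "y \<in> fixpts W" for y
  proof -
    have lim: "(\<lambda>n. inner (x (\<sigma> n) - T (x (\<sigma> n))) (x (\<sigma> n) - y)) \<longlonglongrightarrow> inner (q - T q) (q - y)"
      using q by (intro tendsto_intros isCont_tendsto_compose[OF nonexp_isCont[OF Tn]]) (simp_all add: o_def)
    have "inner (q - T q) (q - y) \<le> e" if e: "e > 0" for e
    proof -
      have "eventually (\<lambda>n. inner (x (\<sigma> n) - T (x (\<sigma> n))) (x (\<sigma> n) - y) \<le> e) sequentially"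
        using eventually_subseq[OF \<sigma> psi_ev[OF y e]] .
      with lim show ?thesis by (rule tendsto_upperbound) simp
    qed
    hence "inner (q - T q) (q - y) \<le> 0" by (meson dense not_le)
    moreover have "inner (q - T q) (y - q) = - inner (q - T q) (q - y)" by (simp add: inner_diff_right)
    ultimately show ?thesis by simp
  qed
  thus ?thesis using qF by (simp add: VIset_def)
qed

lemma Sp_ev:
  assumes e: "e > 0"
  shows "eventually (\<lambda>n. inner (S p - p) (x n - p) \<le> e) sequentially"
proof (rule ccontr)
  assume "\<not> ?thesis"
  then obtain \<sigma> :: "nat \<Rightarrow> nat" where \<sigma>: "strict_mono \<sigma>" "\<And>n. \<not> inner (S p - p) (x (\<sigma> n) - p) \<le> e"
    using not_eventually_subseq by blast
  have "bounded (range (x \<circ> \<sigma>))" using x_bounded by (rule bounded_subset) auto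
  then obtain q \<tau> where \<tau>: "strict_mono \<tau>" "((x \<circ> \<sigma>) \<circ> \<tau>) \<longlonglongrightarrow> q"
    using bounded_imp_convergent_subsequence by blast
  have st: "strict_mono (\<sigma> \<circ> \<tau>)" using \<sigma>(1) \<tau>(1) by (rule strict_mono_o)
  have "q \<in> VIset T (fixpts W)" by (rule cluster[OF st]) (use \<tau>(2) in \<open>simp add: o_assoc\<close>)
  hence vi: "0 \<le> inner (p - S p) (q - p)" by (rule pvi)
  have lim: "(\<lambda>n. inner (S p - p) (x (\<sigma> (\<tau> n)) - p)) \<longlonglongrightarrow> inner (S p - p) (q - p)"
    using \<tau>(2) by (intro tendsto_intros) (simp add: o_def)
  have "e \<le> inner (S p - p) (q - p)"
  proof (rule tendsto_lowerbound[OF lim])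
    show "eventually (\<lambda>n. e \<le> inner (S p - p) (x (\<sigma> (\<tau> n)) - p)) sequentially"
      using \<sigma>(2) by (simp add: not_le less_imp_le)
  qed simp
  moreover have "inner (S p - p) (q - p) = - inner (p - S p) (q - p)" by (simp add: inner_diff_left)
  ultimately show False using vi e by simp
qed

end

context conv begin

lemma pF: "p \<in> fixpts W" using p\<Omega> by (simp add: VIset_def)

lemma step_e: "(norm (x (Suc n) - p))\<^sup>2 \<le> (1 - \<alpha> n * (1 - r)) * (norm (x n - p))\<^sup>2
    + 2 * \<alpha> n * inner (S p - p) (x (Suc n) - p)
    + 2 * \<beta> n * (norm (T p - p) * (infdist (x n) (fixpts W) + E n))"
proof -
  define a where "a = \<alpha> n"
  define b where "b = \<beta> n"
  define X where "X = x n"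
  define X' where "X' = x (Suc n)"
  have a: "0 < a" "a < 1" and b: "0 < b" "b < 1" using \<alpha>_range \<beta>_range by (auto simp: a_def b_def)
  have Wp: "W p = p" using pF by (simp add: fixpts_def)
  define A where "A = a *\<^sub>R (S X - S p) + (1 - a) *\<^sub>R (b *\<^sub>R (T X - T p) + (1 - b) *\<^sub>R (W X - W p))"
  define Bv where "Bv = a *\<^sub>R (S p - p) + ((1 - a) * b) *\<^sub>R (T p - p)"
  have X': "X' = a *\<^sub>R S X + ((1 - a) * b) *\<^sub>R T X + ((1 - a) * (1 - b)) *\<^sub>R W X"
    unfolding X'_def a_def b_def X_def by (rule iter)
  have cp: "((1 - a) * (1 - b)) *\<^sub>R p + ((1 - a) * b) *\<^sub>R p + a *\<^sub>R p = p"
  proof -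
    have "((1 - a) * (1 - b)) *\<^sub>R p + ((1 - a) * b) *\<^sub>R p + a *\<^sub>R p = ((1 - a) * (1 - b) + (1 - a) * b + a) *\<^sub>R p"
      by (simp add: scaleR_left_distrib)
    also have "(1 - a) * (1 - b) + (1 - a) * b + a = 1" by (simp add: algebra_simps)
    finally show ?thesis by simp
  qed
  have eq: "X' - p = A + Bv"
  proof -
    have "A + Bv = a *\<^sub>R S X + ((1 - a) * b) *\<^sub>R T X + ((1 - a) * (1 - b)) *\<^sub>R W X
        - (((1 - a) * (1 - b)) *\<^sub>R p + ((1 - a) * b) *\<^sub>R p + a *\<^sub>R p)"
      unfolding A_def Bv_def Wp by (simp add: algebra_simps)
    thus ?thesis using cp X' by simp
  qed
  define D where "D = norm (X - p)"
  have nA: "norm A \<le> (1 - a * (1 - r)) * D"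
  proof -
    have s: "norm (S X - S p) \<le> r * D" unfolding D_def by (rule Sc)
    have t: "norm (T X - T p) \<le> D" using Tn unfolding nonexp_def D_def by blast
    have w: "norm (W X - W p) \<le> D" using Wn unfolding nonexp_def D_def by blast
    have "norm (b *\<^sub>R (T X - T p) + (1 - b) *\<^sub>R (W X - W p)) \<le> norm (b *\<^sub>R (T X - T p)) + norm ((1 - b) *\<^sub>R (W X - W p))"
      by (rule norm_triangle_ineq)
    also have "\<dots> \<le> b * D + (1 - b) * D" using b t w by (intro add_mono) (simp_all add: mult_left_mono)
    also have "\<dots> = D" by (simp add: algebra_simps)
    finally have tw: "norm (b *\<^sub>R (T X - T p) + (1 - b) *\<^sub>R (W X - W p)) \<le> D" .
    have "norm A \<le> norm (a *\<^sub>R (S X - S p)) + norm ((1 - a) *\<^sub>R (b *\<^sub>R (T X - T p) + (1 - b) *\<^sub>R (W X - W p)))"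
      unfolding A_def by (rule norm_triangle_ineq)
    also have "\<dots> \<le> a * (r * D) + (1 - a) * D" using a s tw by (intro add_mono) (simp_all add: mult_left_mono)
    also have "\<dots> = (1 - a * (1 - r)) * D" by (simp add: algebra_simps)
    finally show ?thesis .
  qed
  have c01: "0 \<le> 1 - a * (1 - r)" "1 - a * (1 - r) \<le> 1"
  proof -
    have "a * (1 - r) \<le> 1 * 1" using a r by (intro mult_mono) auto
    thus "0 \<le> 1 - a * (1 - r)" by simp
    show "1 - a * (1 - r) \<le> 1" using a r by simp
  qed
  have nA2: "(norm A)\<^sup>2 \<le> (1 - a * (1 - r)) * D\<^sup>2"
  proof -
    have "(norm A)\<^sup>2 \<le> ((1 - a * (1 - r)) * D)\<^sup>2" using nA by (rule power_mono) simp
    also have "\<dots> = (1 - a * (1 - r)) * ((1 - a * (1 - r)) * D\<^sup>2)" by (simp add: power2_eq_square)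
    also have "\<dots> \<le> (1 - a * (1 - r)) * (1 * D\<^sup>2)" using c01 by (intro mult_left_mono mult_right_mono) auto
    finally show ?thesis by simp
  qed
  have sq: "(norm (A + Bv))\<^sup>2 \<le> (norm A)\<^sup>2 + 2 * inner (A + Bv) Bv"
  proof -
    have "(norm (A + Bv))\<^sup>2 = (norm A)\<^sup>2 + 2 * inner (A + Bv) Bv - (norm Bv)\<^sup>2"
      by (simp add: power2_norm_eq_inner inner_add_left inner_add_right inner_commute)
    thus ?thesis by simp
  qed
  have ib0: "inner (A + Bv) Bv = inner (X' - p) Bv" using eq by simp
  have ib: "inner (A + Bv) Bv = a * inner (S p - p) (X' - p) + ((1 - a) * b) * inner (T p - p) (X' - p)"
    unfolding ib0 unfolding Bv_def by (simp add: inner_add_right inner_commute)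
  define d where "d = infdist X (fixpts W)"
  have Tterm: "inner (T p - p) (X' - p) \<le> norm (T p - p) * (d + E n)"
  proof -
    have Fne: "fixpts W \<noteq> {}" using pF by blast
    obtain z where z: "z \<in> fixpts W" "infdist X (fixpts W) = dist X z"
      using infdist_attains_inf[OF fix_closed[OF Wn] Fne] by blast
    have 1: "inner (T p - p) (z - p) \<le> 0"
    proof -
      have "0 \<le> inner (p - T p) (z - p)" using p\<Omega> z(1) by (simp add: VIset_def)
      moreover have "inner (T p - p) (z - p) = - inner (p - T p) (z - p)" by (simp add: inner_diff_left)
      ultimately show ?thesis by simp
    qed
    have 2: "inner (T p - p) (X - z) \<le> norm (T p - p) * d"
    proof -
      have "inner (T p - p) (X - z) \<le> norm (T p - p) * norm (X - z)" by (rule norm_cauchy_schwarz)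
      also have "norm (X - z) = d" using z(2) by (simp add: d_def dist_norm)
      finally show ?thesis .
    qed
    have 3: "inner (T p - p) (X' - X) \<le> norm (T p - p) * E n"
    proof -
      have "inner (T p - p) (X' - X) \<le> norm (T p - p) * norm (X' - X)" by (rule norm_cauchy_schwarz)
      also have "norm (X' - X) = E n" by (simp add: E_def X_def X'_def)
      finally show ?thesis .
    qed
    have sumeq: "(z - p) + (X - z) + (X' - X) = X' - p" by simp
    have e3: "inner (T p - p) ((z - p) + (X - z) + (X' - X)) = inner (T p - p) (z - p) + inner (T p - p) (X - z) + inner (T p - p) (X' - X)"
      by (simp only: inner_add_right)
    hence "inner (T p - p) (X' - p) = inner (T p - p) (z - p) + inner (T p - p) (X - z) + inner (T p - p) (X' - X)"
      unfolding sumeq .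
    thus ?thesis using 1 2 3 by (simp add: distrib_left)
  qed
  have K0: "0 \<le> norm (T p - p) * (d + E n)" unfolding d_def E_def by (simp add: infdist_nonneg)
  have "((1 - a) * b) * inner (T p - p) (X' - p) \<le> ((1 - a) * b) * (norm (T p - p) * (d + E n))"
    using Tterm a b by (intro mult_left_mono) auto
  also have "\<dots> \<le> b * (norm (T p - p) * (d + E n))"
    using K0 a b by (intro mult_right_mono) (auto simp: mult_le_cancel_right1)
  finally have tb: "((1 - a) * b) * inner (T p - p) (X' - p) \<le> b * (norm (T p - p) * (d + E n))" .
  have "(norm (X' - p))\<^sup>2 \<le> (1 - a * (1 - r)) * D\<^sup>2 + 2 * (a * inner (S p - p) (X' - p) + ((1 - a) * b) * inner (T p - p) (X' - p))"
  proof -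
    have ib': "inner (X' - p) Bv = a * inner (S p - p) (X' - p) + ((1 - a) * b) * inner (T p - p) (X' - p)"
      using ib0 ib by simp
    have "(norm (X' - p))\<^sup>2 \<le> (norm A)\<^sup>2 + 2 * inner (X' - p) Bv" using sq eq by simp
    thus ?thesis using nA2 ib' by argo
  qed
  also have "\<dots> \<le> (1 - a * (1 - r)) * D\<^sup>2 + 2 * a * inner (S p - p) (X' - p) + 2 * b * (norm (T p - p) * (d + E n))"
    using tb by simp
  finally show ?thesis unfolding a_def b_def X_def X'_def D_def d_def .
qed

lemma conv_main: "x \<longlonglongrightarrow> p"
proof -
  define g where "g = (\<lambda>n. \<alpha> n * (1 - r))"
  define d where "d = (\<lambda>n. (2 * inner (S p - p) (x (Suc n) - p)
      + 2 * (\<beta> n / \<alpha> n) * (norm (T p - p) * (infdist (x n) (fixpts W) + E n))) / (1 - r))"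
  have "(\<lambda>n. (norm (x n - p))\<^sup>2) \<longlonglongrightarrow> 0"
  proof (rule xu_lemma[where g = g and d = d])
    fix n show "0 \<le> (norm (x n - p))\<^sup>2" by simp
  next
    show "\<exists>N. \<forall>n\<ge>N. (norm (x (Suc n) - p))\<^sup>2 \<le> (1 - g n) * (norm (x n - p))\<^sup>2 + g n * d n \<and> 0 \<le> g n \<and> g n \<le> 1"
    proof (intro exI allI impI conjI)
      fix n
      have a: "0 < \<alpha> n" "\<alpha> n < 1" using \<alpha>_range by auto
      have "g n * d n = 2 * \<alpha> n * inner (S p - p) (x (Suc n) - p)
          + 2 * \<beta> n * (norm (T p - p) * (infdist (x n) (fixpts W) + E n))"
        using a r by (simp add: g_def d_def field_simps)
      thus "(norm (x (Suc n) - p))\<^sup>2 \<le> (1 - g n) * (norm (x n - p))\<^sup>2 + g n * d n"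
        using step_e[of n] by (simp add: g_def)
      show "0 \<le> g n" using a r by (simp add: g_def)
      have "\<alpha> n * (1 - r) \<le> 1 * 1" using a r by (intro mult_mono) auto
      thus "g n \<le> 1" by (simp add: g_def)
    qed
  next
    show "filterlim (\<lambda>n. \<Sum>k<n. g k) at_top sequentially"
      unfolding filterlim_at_top
    proof
      fix Z :: real
      have c: "1 - r > 0" using r by simp
      have "eventually (\<lambda>n. Z / (1 - r) \<le> (\<Sum>k<n. \<alpha> k)) sequentially"
        using \<alpha>_div unfolding filterlim_at_top by blast
      thus "eventually (\<lambda>n. Z \<le> (\<Sum>k<n. g k)) sequentially"
      proof eventually_elim
        case (elim n)
        hence "Z \<le> (\<Sum>k<n. \<alpha> k) * (1 - r)" using c by (simp add: divide_le_eq)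
        also have "\<dots> = (\<Sum>k<n. g k)" by (simp add: g_def sum_distrib_right)
        finally show ?case .
      qed
    qed
  next
    fix e :: real assume e: "e > 0"
    define e1 where "e1 = e * (1 - r) / 4"
    have e1: "e1 > 0" using e r by (simp add: e1_def)
    obtain Cd where Cd: "Cd \<ge> 0" "eventually (\<lambda>n. infdist (x n) (fixpts W) \<le> Cd * \<beta> n) sequentially"
      using dist_bound by blast
    define \<eta> where "\<eta> = e1 / ((norm (T p - p) + 1) * (Cd + 1))"
    have "(norm (T p - p) + 1) * (Cd + 1) > 0" using Cd(1) by (intro mult_pos_pos) (auto simp: add_nonneg_pos)
    hence \<eta>: "\<eta> > 0" using e1 by (simp add: \<eta>_def)
    have ev1: "eventually (\<lambda>n. inner (S p - p) (x (Suc n) - p) \<le> e1) sequentially"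
      using eventually_sequentially_Suc[of "\<lambda>n. inner (S p - p) (x n - p) \<le> e1"] Sp_ev[OF e1] by simp
    have ev2: "eventually (\<lambda>n. E n \<le> 1 * \<beta> n) sequentially" by (rule E_small) simp
    from ev1 ev2 Cd(2) ev_A2[OF \<eta>]
    show "eventually (\<lambda>n. d n \<le> e) sequentially"
    proof eventually_elim
      case (elim n)
      have a: "0 < \<alpha> n" and b: "0 < \<beta> n" using \<alpha>_range \<beta>_range by auto
      have de: "infdist (x n) (fixpts W) + E n \<le> (Cd + 1) * \<beta> n" using elim by (simp add: algebra_simps)
      have "(\<beta> n / \<alpha> n) * (norm (T p - p) * (infdist (x n) (fixpts W) + E n))
          \<le> (\<beta> n / \<alpha> n) * (norm (T p - p) * ((Cd + 1) * \<beta> n))"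
        using de a b by (intro mult_left_mono) auto
      also have "\<dots> = (norm (T p - p) * (Cd + 1)) * ((\<beta> n)\<^sup>2 / \<alpha> n)" by (simp add: power2_eq_square)
      also have "\<dots> \<le> (norm (T p - p) * (Cd + 1)) * \<eta>"
        using elim(4) Cd(1) by (intro mult_left_mono) auto
      also have "\<dots> \<le> e1"
      proof -
        have "(norm (T p - p) * (Cd + 1)) * \<eta> = e1 * (norm (T p - p) / (norm (T p - p) + 1))"
          using Cd(1) by (simp add: \<eta>_def divide_simps)
        also have "\<dots> \<le> e1 * 1" using e1 by (intro mult_left_mono) (auto simp: divide_le_eq_1 add_nonneg_pos)
        finally show ?thesis by simp
      qed
      finally have t2: "(\<beta> n / \<alpha> n) * (norm (T p - p) * (infdist (x n) (fixpts W) + E n)) \<le> e1" .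
      have "2 * inner (S p - p) (x (Suc n) - p) + 2 * (\<beta> n / \<alpha> n) * (norm (T p - p) * (infdist (x n) (fixpts W) + E n))
          \<le> 4 * e1" using elim(1) t2 by simp
      hence "d n \<le> 4 * e1 / (1 - r)" unfolding d_def using r by (intro divide_right_mono) auto
      also have "\<dots> = e" using r by (simp add: e1_def)
      finally show ?case .
    qed
  qed
  hence "(\<lambda>n. sqrt ((norm (x n - p))\<^sup>2)) \<longlonglongrightarrow> sqrt 0" by (rule tendsto_real_sqrt)
  hence "(\<lambda>n. norm (x n - p)) \<longlonglongrightarrow> 0" by simp
  thus ?thesis by (simp add: tendsto_norm_zero_iff LIM_zero_iff)
qed

end

theorem mainTheorem7:
  fixes f1 f2 \<omega> :: "'a::euclidean_space \<Rightarrow> real"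
    and gf1 gf2 g\<omega> :: "'a \<Rightarrow> 'a"
    and g1 g2 :: "'a \<Rightarrow> ereal"
    and Lf1 Lf2 L\<omega> \<mu> u t s :: real
    and \<alpha> \<beta> :: "nat \<Rightarrow> real"
    and x :: "nat \<Rightarrow> 'a"
    and S T W :: "'a \<Rightarrow> 'a"
    and Ystar Xstar \<Omega> :: "'a set"
  assumes f1_convex: "convex_on UNIV f1" and f2_convex: "convex_on UNIV f2"
    and f1_grad: "\<And>y. GDERIV f1 y :> gf1 y" and f2_grad: "\<And>y. GDERIV f2 y :> gf2 y"
    and Lf1_pos: "Lf1 > 0" and Lf2_pos: "Lf2 > 0"
    and gf1_lip: "Lf1-lipschitz_on UNIV gf1" and gf2_lip: "Lf2-lipschitz_on UNIV gf2"
    and g1_proper: "proper_fun g1" and g1_lsc: "lsc_fun g1" and g1_convex: "convex_efun g1"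
    and g2_proper: "proper_fun g2" and g2_lsc: "lsc_fun g2" and g2_convex: "convex_efun g2"
    and \<mu>_pos: "\<mu> > 0" and \<omega>_sc: "strongly_convex \<mu> \<omega>"
    and \<omega>_grad: "\<And>y. GDERIV \<omega> y :> g\<omega> y"
    and L\<omega>_pos: "L\<omega> > 0" and g\<omega>_lip: "L\<omega>-lipschitz_on UNIV g\<omega>"
    and Ystar_def: "Ystar = {y. \<forall>z. ereal (f2 y) + g2 y \<le> ereal (f2 z) + g2 z}"
    and Xstar_def: "Xstar = {y \<in> Ystar. \<forall>z \<in> Ystar. ereal (f1 y) + g1 y \<le> ereal (f1 z) + g1 z}"
    and Ystar_ne: "Ystar \<noteq> {}" and Xstar_ne: "Xstar \<noteq> {}"
    and u_range: "0 < u" "u \<le> 2 / (L\<omega> + \<mu>)"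
    and t_range: "0 < t" "t \<le> 1 / Lf1"
    and s_range: "0 < s" "s \<le> 1 / Lf2"
    and S_def: "\<And>y. S y = y - u *\<^sub>R g\<omega> y"
    and T_def: "\<And>y. T y = prox (\<lambda>z. ereal t * g1 z) (y - t *\<^sub>R gf1 y)"
    and W_def: "\<And>y. W y = prox (\<lambda>z. ereal s * g2 z) (y - s *\<^sub>R gf2 y)"
    and \<alpha>_range: "\<And>k. 0 < \<alpha> k \<and> \<alpha> k < 1"
    and \<beta>_range: "\<And>k. 0 < \<beta> k \<and> \<beta> k < 1"
    and iter: "\<And>k. x (Suc k) = \<alpha> k *\<^sub>R S (x k) + ((1 - \<alpha> k) * \<beta> k) *\<^sub>R T (x k)
                              + ((1 - \<alpha> k) * (1 - \<beta> k)) *\<^sub>R W (x k)"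
    and \<Omega>_def: "\<Omega> = {y \<in> fixpts W. \<forall>z \<in> fixpts W. inner (y - T y) (z - y) \<ge> 0}"
    and \<Omega>_ne: "\<Omega> \<noteq> {}"
    and ratio_lim: "filterlim (\<lambda>k. \<beta> k / \<alpha> k) at_top sequentially"
    and \<alpha>_lim: "\<alpha> \<longlonglongrightarrow> 0"
    and \<alpha>_div: "filterlim (\<lambda>n. \<Sum>k<n. \<alpha> k) at_top sequentially"
    and K_cond: "\<exists>K>0. limsup (\<lambda>k. ereal (1 / \<alpha> (Suc k) * \<bar>1 / \<beta> (Suc k) - 1 / \<beta> k\<bar>)) \<le> ereal K"
    and diff_cond: "limsup (\<lambda>k. ereal ((\<bar>\<beta> (Suc k) - \<beta> k\<bar> + \<bar>\<alpha> (Suc k) - \<alpha> k\<bar>)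
                                     / (\<alpha> (Suc k) * \<beta> (Suc k)))) = 0"
    and x_bounded: "bounded (range x)"
    and A1: "\<forall>\<rho>>0. \<exists>\<theta>>0. \<forall>y. norm y \<le> \<rho> \<longrightarrow> infdist y (fixpts W) \<le> \<theta> * norm (y - W y)"
    and A2: "limsup (\<lambda>k. ereal ((\<beta> k)\<^sup>2 / \<alpha> k)) = 0"
  shows "\<exists>xs. xs \<in> \<Omega> \<and> (\<forall>y\<in>\<Omega>. inner (xs - S xs) (y - xs) \<ge> 0)
            \<and> (\<forall>z. z \<in> \<Omega> \<and> (\<forall>y\<in>\<Omega>. inner (z - S z) (y - z) \<ge> 0) \<longrightarrow> z = xs)
            \<and> (\<forall>y\<in>\<Omega>. \<omega> xs \<le> \<omega> y)
            \<and> x \<longlonglongrightarrow> xs"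
proof -
  have Tn: "nonexp T" unfolding nonexp_def T_def
    using fb_nonexp[OF f1_convex f1_grad Lf1_pos gf1_lip t_range g1_proper g1_lsc g1_convex] by blast
  have Wn: "nonexp W" unfolding nonexp_def W_def
    using fb_nonexp[OF f2_convex f2_grad Lf2_pos gf2_lip s_range g2_proper g2_lsc g2_convex] by blast
  obtain r where r: "0 \<le> r" "r < 1" and Sc0: "\<And>a b. norm ((a - u *\<^sub>R g\<omega> a) - (b - u *\<^sub>R g\<omega> b)) \<le> r * norm (a - b)"
    using S_contraction[OF \<omega>_sc \<mu>_pos \<omega>_grad L\<omega>_pos g\<omega>_lip u_range] by blast
  have Sc: "\<And>a b. norm (S a - S b) \<le> r * norm (a - b)" unfolding S_def by (rule Sc0)
  have \<Omega>eq: "\<Omega> = VIset T (fixpts W)" unfolding \<Omega>_def VIset_def ..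
  have \<Omega>cl: "closed \<Omega>" unfolding \<Omega>eq by (rule VI_closed[OF Tn fix_closed[OF Wn]])
  have \<Omega>cv: "convex \<Omega>" unfolding \<Omega>eq by (rule VI_convex[OF Tn fix_convex[OF Wn]])
  have \<omega>cont: "continuous_on UNIV \<omega>"
    using \<omega>_grad unfolding gderiv_def by (intro has_derivative_continuous_on) (blast intro: has_derivative_at_withinI)
  obtain xs where xs: "xs \<in> \<Omega>" "\<And>y. y \<in> \<Omega> \<Longrightarrow> \<omega> xs \<le> \<omega> y"
    using min_exists[OF \<Omega>cl \<Omega>_ne \<omega>cont \<mu>_pos sc_coercive[OF \<omega>_sc \<omega>_grad]] by blast
  have vi: "0 \<le> inner (xs - S xs) (y - xs)" if y: "y \<in> \<Omega>" for y
  proof -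
    have "0 \<le> inner (g\<omega> xs) (y - xs)" by (rule vi_of_min[OF \<Omega>cv xs \<omega>_grad y])
    hence "0 \<le> u * inner (g\<omega> xs) (y - xs)" using u_range by simp
    thus ?thesis by (simp add: S_def)
  qed
  have uniq: "z = xs" if z: "z \<in> \<Omega>" "\<forall>y\<in>\<Omega>. inner (z - S z) (y - z) \<ge> 0" for z
    by (rule vi_unique[OF r(2) Sc]) (use z xs(1) vi in auto)
  interpret conv S T W \<alpha> \<beta> x r xs
  proof
    show "xs \<in> VIset T (fixpts W)" using xs(1) \<Omega>eq by simp
    fix y assume "y \<in> VIset T (fixpts W)"
    thus "0 \<le> inner (xs - S xs) (y - xs)" using vi \<Omega>eq by simp
  qed (use r Sc Tn Wn \<alpha>_range \<beta>_range iter ratio_lim \<alpha>_div K_cond diff_cond x_bounded A1 A2 in auto)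
  show ?thesis
    using xs vi uniq conv_main by blast
qed


end
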